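(* There exists a PBD$(v,\{3,5\})$ of dimension three for $v = 89$ and $v = 95$.
   Context: For a positive integer $v$ and $K \subseteq \{2,3,4,\dots\}$, a pairwise balanced design PBD$(v,K)$ is a pair $(X,\mathcal{B})$ where $X$ is a $v$-set of points and $\mathcal{B}$ is a family of subsets of $X$ (blocks), each of size in $K$, such that any two distinct points of $X$ lie together in exactly one block. A flat (subdesign) is a pair $(Y,\mathcal{B}_Y)$ with $Y \subseteq X$ and $\mathcal{B}_Y = \{B \in \mathcal{B} : B \subseteq Y\}$ such that any two distinct points of $Y$ lie together in exactly one block of $\mathcal{B}_Y$; it is proper if $Y \ne X$. The dimension of the PBD is the maximum integer $d$ such that every set of $d$ points is contained in a proper flat. *)

theory Defs
  imports Main
begin

definition PBD :: "'a set \<Rightarrow> 'a set set \<Rightarrow> nat \<Rightarrow> nat set \<Rightarrow> bool" where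
  "PBD X \<B> v K \<longleftrightarrow> finite X \<and> card X = v \<and>
     (\<forall>B\<in>\<B>. B \<subseteq> X \<and> card B \<in> K) \<and>
     (\<forall>x\<in>X. \<forall>y\<in>X. x \<noteq> y \<longrightarrow> (\<exists>!B. B \<in> \<B> \<and> x \<in> B \<and> y \<in> B))"

definition blocks_in :: "'a set set \<Rightarrow> 'a set \<Rightarrow> 'a set set" where
  "blocks_in \<B> Y = {B \<in> \<B>. B \<subseteq> Y}"

definition is_flat :: "'a set \<Rightarrow> 'a set set \<Rightarrow> 'a set \<Rightarrow> bool" where
  "is_flat X \<B> Y \<longleftrightarrow> Y \<subseteq> X \<and>
     (\<forall>x\<in>Y. \<forall>y\<in>Y. x \<noteq> y \<longrightarrow> (\<exists>!B. B \<in> blocks_in \<B> Y \<and> x \<in> B \<and> y \<in> B))"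

definition is_proper_flat :: "'a set \<Rightarrow> 'a set set \<Rightarrow> 'a set \<Rightarrow> bool" where
  "is_proper_flat X \<B> Y \<longleftrightarrow> is_flat X \<B> Y \<and> Y \<noteq> X"

definition sets_in_proper_flats :: "'a set \<Rightarrow> 'a set set \<Rightarrow> nat \<Rightarrow> bool" where
  "sets_in_proper_flats X \<B> d \<longleftrightarrow>
     (\<forall>S. S \<subseteq> X \<and> card S = d \<longrightarrow> (\<exists>Y. is_proper_flat X \<B> Y \<and> S \<subseteq> Y))"

text \<open>The dimension: the maximum d such that every d-set of points lies in a proper flat
  (d ranges over sizes of actual point sets, d \<le> |X|, so vacuous large d are excluded).\<close>
definition pbd_dimension :: "'a set \<Rightarrow> 'a set set \<Rightarrow> nat" where
  "pbd_dimension X \<B> = (GREATEST d. d \<le> card X \<and> sets_in_proper_flats X \<B> d)"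

end

theory Submission
  imports Defs "HOL-Library.Countable"
begin

lemma xor_cancel1[simp]: "xor (a::nat) (xor a b) = b" by (simp add: xor.assoc[symmetric])
lemma xor_cancel2[simp]: "xor (a::nat) (xor b a) = b" by (metis xor.commute xor_cancel1)
lemma xor_cancel3[simp]: "xor (xor (a::nat) b) a = b" by (metis xor.commute xor_cancel1)
lemma xor_cancel4[simp]: "xor (xor (b::nat) a) a = b" by (simp add: xor.assoc)
lemma xor_eq0[simp]: "xor (a::nat) b = 0 \<longleftrightarrow> a = b"
  by (metis xor_cancel4 xor_self_eq)
lemma xor_eq_left[simp]: "xor (a::nat) b = a \<longleftrightarrow> b = 0"
  by (metis xor_cancel1 xor.right_neutral)
lemma xor_eq_right[simp]: "xor (a::nat) b = b \<longleftrightarrow> a = 0"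
  by (metis xor_cancel4 xor.left_neutral)
lemma xor_lt_pow: "(a::nat) < 2^n \<Longrightarrow> b < 2^n \<Longrightarrow> xor a b < 2^n"
proof -
  assume a: "a < 2^n" and b: "b < 2^n"
  have "int (xor a b) = xor (int a) (int b)" by (rule of_nat_xor_eq)
  also have "\<dots> < 2^n" using a b by (intro XOR_upper) auto
  finally have "int (xor a b) < int (2^n)" by simp
  then show ?thesis by linarith
qed

definition closedB :: "'a set set \<Rightarrow> 'a set \<Rightarrow> bool" where
  "closedB B Y \<longleftrightarrow> (\<forall>b\<in>B. \<forall>x\<in>b. \<forall>y\<in>b. x \<noteq> y \<longrightarrow> x \<in> Y \<longrightarrow> y \<in> Y \<longrightarrow> b \<subseteq> Y)"

definition pbd2 :: "'a set \<Rightarrow> 'a set set \<Rightarrow> nat \<Rightarrow> nat set \<Rightarrow> bool" where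
  "pbd2 X B v K \<longleftrightarrow> finite X \<and> card X = v \<and> (\<forall>b\<in>B. b \<subseteq> X \<and> card b \<in> K) \<and>
     (\<forall>x\<in>X. \<forall>y\<in>X. x \<noteq> y \<longrightarrow> (\<exists>b\<in>B. x \<in> b \<and> y \<in> b)) \<and>
     (\<forall>b\<in>B. \<forall>b'\<in>B. \<forall>x y. x \<noteq> y \<longrightarrow> x \<in> b \<longrightarrow> y \<in> b \<longrightarrow> x \<in> b' \<longrightarrow> y \<in> b' \<longrightarrow> b = b')"

lemma pbd2D:
  assumes P: "pbd2 X B v K"
  shows "finite X" "card X = v" "\<And>b. b\<in>B \<Longrightarrow> b \<subseteq> X" "\<And>b. b\<in>B \<Longrightarrow> card b \<in> K"
    "\<And>x y. x\<in>X \<Longrightarrow> y\<in>X \<Longrightarrow> x\<noteq>y \<Longrightarrow> \<exists>b\<in>B. x\<in>b \<and> y\<in>b"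
    "\<And>b b' x y. b\<in>B \<Longrightarrow> b'\<in>B \<Longrightarrow> x\<noteq>y \<Longrightarrow> x\<in>b \<Longrightarrow> y\<in>b \<Longrightarrow> x\<in>b' \<Longrightarrow> y\<in>b' \<Longrightarrow> b = b'"
proof -
  note A = P[unfolded pbd2_def]
  show "finite X" using A by simp
  show "card X = v" using A by simp
  show "\<And>b. b\<in>B \<Longrightarrow> b \<subseteq> X" using A by simp
  show "\<And>b. b\<in>B \<Longrightarrow> card b \<in> K" using A by simp
  show "\<And>x y. x\<in>X \<Longrightarrow> y\<in>X \<Longrightarrow> x\<noteq>y \<Longrightarrow> \<exists>b\<in>B. x\<in>b \<and> y\<in>b" using A by simp
  show "\<And>b b' x y. b\<in>B \<Longrightarrow> b'\<in>B \<Longrightarrow> x\<noteq>y \<Longrightarrow> x\<in>b \<Longrightarrow> y\<in>b \<Longrightarrow> x\<in>b' \<Longrightarrow> y\<in>b' \<Longrightarrow> b = b'"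
  proof -
    fix b b' x y assume H: "b\<in>B" "b'\<in>B" "x\<noteq>y" "x\<in>b" "y\<in>b" "x\<in>b'" "y\<in>b'"
    from A have U: "\<forall>b\<in>B. \<forall>b'\<in>B. \<forall>x y. x \<noteq> y \<longrightarrow> x \<in> b \<longrightarrow> y \<in> b \<longrightarrow> x \<in> b' \<longrightarrow> y \<in> b' \<longrightarrow> b = b'" by simp
    show "b = b'" by (rule U[rule_format, OF H])
  qed
qed

lemma pbd2I:
  assumes "finite X" "card X = v" "\<And>b. b\<in>B \<Longrightarrow> b \<subseteq> X" "\<And>b. b\<in>B \<Longrightarrow> card b \<in> K"
    "\<And>x y. x\<in>X \<Longrightarrow> y\<in>X \<Longrightarrow> x\<noteq>y \<Longrightarrow> \<exists>b\<in>B. x\<in>b \<and> y\<in>b"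
    "\<And>b b' x y. b\<in>B \<Longrightarrow> b'\<in>B \<Longrightarrow> x\<noteq>y \<Longrightarrow> x\<in>b \<Longrightarrow> y\<in>b \<Longrightarrow> x\<in>b' \<Longrightarrow> y\<in>b' \<Longrightarrow> b = b'"
  shows "pbd2 X B v K"
  unfolding pbd2_def using assms by simp

lemma pbd2_PBD:
  assumes P: "pbd2 X B v K" shows "PBD X B v K"
proof -
  have E: "\<forall>x\<in>X. \<forall>y\<in>X. x \<noteq> y \<longrightarrow> (\<exists>!b. b \<in> B \<and> x \<in> b \<and> y \<in> b)"
  proof (intro ballI impI)
    fix x y assume xy: "x \<in> X" "y \<in> X" "x \<noteq> y"
    then obtain b where b: "b \<in> B" "x \<in> b" "y \<in> b" using pbd2D(5)[OF P] by blast
    show "\<exists>!b. b \<in> B \<and> x \<in> b \<and> y \<in> b"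
    proof (rule ex1I[of _ b])
      show "b \<in> B \<and> x \<in> b \<and> y \<in> b" using b by simp
      fix b' assume "b' \<in> B \<and> x \<in> b' \<and> y \<in> b'"
      then show "b' = b" using pbd2D(6)[OF P, of b' b x y] b xy by simp
    qed
  qed
  have "\<forall>b\<in>B. b \<subseteq> X \<and> card b \<in> K" using pbd2D(3,4)[OF P] by simp
  then show ?thesis unfolding PBD_def using E pbd2D(1,2)[OF P] by simp
qed
lemma pbd2_flat_iff:
  assumes P: "pbd2 X B v K"
  shows "is_flat X B Y \<longleftrightarrow> Y \<subseteq> X \<and> closedB B Y"
proof
  assume f: "is_flat X B Y"
  show "Y \<subseteq> X \<and> closedB B Y" unfolding closedB_def
  proof (intro conjI ballI impI)
    show "Y \<subseteq> X" using f unfolding is_flat_def by simp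
    fix b x y assume b: "b \<in> B" "x \<in> b" "y \<in> b" "x \<noteq> y" "x \<in> Y" "y \<in> Y"
    have "Y \<subseteq> X \<and> (\<forall>x\<in>Y. \<forall>y\<in>Y. x \<noteq> y \<longrightarrow> (\<exists>!b. b \<in> blocks_in B Y \<and> x \<in> b \<and> y \<in> b))"
      using f unfolding is_flat_def by simp
    then have "\<exists>!b. b \<in> blocks_in B Y \<and> x \<in> b \<and> y \<in> b" using b by simp
    then obtain b' where b': "b' \<in> blocks_in B Y" "x \<in> b'" "y \<in> b'" by blast
    then have "b' \<in> B" "b' \<subseteq> Y" by (auto simp: blocks_in_def)
    then have "b = b'" using pbd2D(6)[OF P b(1) \<open>b' \<in> B\<close> b(4) b(2,3) b'(2,3)] by simp
    then show "b \<subseteq> Y" using \<open>b' \<subseteq> Y\<close> by simp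
  qed
next
  assume a: "Y \<subseteq> X \<and> closedB B Y"
  show "is_flat X B Y" unfolding is_flat_def
  proof (intro conjI ballI impI)
    show "Y \<subseteq> X" using a by simp
    fix x y assume xy: "x \<in> Y" "y \<in> Y" "x \<noteq> y"
    then have "x \<in> X" "y \<in> X" using a by auto
    then obtain b where b: "b \<in> B" "x \<in> b" "y \<in> b" using pbd2D(5)[OF P] xy by blast
    then have bY: "b \<subseteq> Y" using a xy unfolding closedB_def by blast
    show "\<exists>!b. b \<in> blocks_in B Y \<and> x \<in> b \<and> y \<in> b"
    proof (rule ex1I[of _ b])
      show "b \<in> blocks_in B Y \<and> x \<in> b \<and> y \<in> b" using b bY by (simp add: blocks_in_def)
      fix b' assume b': "b' \<in> blocks_in B Y \<and> x \<in> b' \<and> y \<in> b'"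
      then have "b' \<in> B" by (simp add: blocks_in_def)
      then show "b' = b" using pbd2D(6)[OF P] b b' xy by blast
    qed
  qed
qed

lemma pbd2_proper_iff:
  assumes "pbd2 X B v K"
  shows "is_proper_flat X B Y \<longleftrightarrow> Y \<subseteq> X \<and> closedB B Y \<and> Y \<noteq> X"
  using pbd2_flat_iff[OF assms] unfolding is_proper_flat_def by blast

lemma dim3:
  assumes fin: "finite X" and c4: "4 \<le> card X" and s3: "sets_in_proper_flats X B 3"
    and n4: "\<not> sets_in_proper_flats X B 4"
  shows "pbd_dimension X B = 3"
  unfolding pbd_dimension_def
proof (rule Greatest_equality)
  show "3 \<le> card X \<and> sets_in_proper_flats X B 3" using c4 s3 by simp
  fix y assume y: "y \<le> card X \<and> sets_in_proper_flats X B y"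
  show "y \<le> 3"
  proof (rule ccontr)
    assume "\<not> y \<le> 3"
    then have y4: "4 \<le> y" by simp
    have "sets_in_proper_flats X B 4" unfolding sets_in_proper_flats_def
    proof (intro allI impI)
      fix S assume S: "S \<subseteq> X \<and> card S = 4"
      then have finS: "finite S" using fin finite_subset by blast
      have "card (X - S) = card X - 4" using S fin by (simp add: card_Diff_subset finS)
      moreover have "y - 4 \<le> card X - 4" using y by (simp add: diff_le_mono)
      ultimately have "y - 4 \<le> card (X - S)" by simp
      then obtain T where T: "T \<subseteq> X - S" "card T = y - 4"
        using obtain_subset_with_card_n by metis
      have finT: "finite T" using T fin finite_subset by blast
      have "S \<inter> T = {}" using T by auto
      then have "card (S \<union> T) = card S + card T" using finS finT by (simp add: card_Un_disjoint)
      then have "card (S \<union> T) = y" using T S y4 by simp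
      moreover have "S \<union> T \<subseteq> X" using S T by auto
      ultimately obtain Y where "is_proper_flat X B Y" "S \<union> T \<subseteq> Y"
        using y[THEN conjunct2, unfolded sets_in_proper_flats_def, rule_format, of "S \<union> T"] by blast
      then show "\<exists>Y. is_proper_flat X B Y \<and> S \<subseteq> Y" by blast
    qed
    with n4 show False by simp
  qed
qed

lemma closedB_image:
  assumes f: "inj f" shows "closedB ((`) f ` B) (f ` Y) \<longleftrightarrow> closedB B Y"
proof
  assume c: "closedB ((`) f ` B) (f ` Y)"
  show "closedB B Y" unfolding closedB_def
  proof (intro ballI impI)
    fix b x y assume H: "b \<in> B" "x \<in> b" "y \<in> b" "x \<noteq> y" "x \<in> Y" "y \<in> Y"
    have "f ` b \<in> (`) f ` B" using H by simp
    moreover have "f x \<in> f ` b" "f y \<in> f ` b" "f x \<in> f ` Y" "f y \<in> f ` Y" using H by auto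
    moreover have "f x \<noteq> f y" using H f by (simp add: inj_eq)
    ultimately have "f ` b \<subseteq> f ` Y" using c unfolding closedB_def by blast
    then show "b \<subseteq> Y" using f by (simp add: inj_image_subset_iff)
  qed
next
  assume c: "closedB B Y"
  show "closedB ((`) f ` B) (f ` Y)" unfolding closedB_def
  proof (intro ballI impI)
    fix b' x' y' assume H: "b' \<in> (`) f ` B" "x' \<in> b'" "y' \<in> b'" "x' \<noteq> y'" "x' \<in> f ` Y" "y' \<in> f ` Y"
    obtain b where b: "b \<in> B" "b' = f ` b" using H by blast
    obtain x where x: "x \<in> b" "x' = f x" using H b by blast
    obtain y where y: "y \<in> b" "y' = f y" using H b by blast
    have "x \<in> Y" "y \<in> Y" using H x y f by (auto simp: inj_image_mem_iff)
    moreover have "x \<noteq> y" using H x y by auto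
    ultimately have "b \<subseteq> Y" using c b x y unfolding closedB_def by blast
    then show "b' \<subseteq> f ` Y" using b by auto
  qed
qed

lemma pbd2_image:
  assumes f: "inj f" and P: "pbd2 X B v K"
  shows "pbd2 (f ` X) ((`) f ` B) v K"
proof (rule pbd2I)
  have inj: "inj_on f A" for A using f inj_on_subset by blast
  show "finite (f ` X)" using pbd2D(1)[OF P] by simp
  show "card (f ` X) = v" using pbd2D(2)[OF P] inj by (simp add: card_image)
  fix b assume "b \<in> (`) f ` B"
  then obtain c where c: "c \<in> B" "b = f ` c" by blast
  show "b \<subseteq> f ` X" using c pbd2D(3)[OF P] by auto
  show "card b \<in> K" using c pbd2D(4)[OF P] inj by (simp add: card_image)
next
  fix x y assume "x \<in> f ` X" "y \<in> f ` X" "x \<noteq> y"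
  then obtain x0 y0 where "x0 \<in> X" "y0 \<in> X" "x = f x0" "y = f y0" "x0 \<noteq> y0" by blast
  then obtain c where "c \<in> B" "x0 \<in> c" "y0 \<in> c" using pbd2D(5)[OF P] by blast
  then show "\<exists>b\<in>(`) f ` B. x \<in> b \<and> y \<in> b" using \<open>x = f x0\<close> \<open>y = f y0\<close> by blast
next
  fix b1 b2 x y assume H: "b1 \<in> (`) f ` B" "b2 \<in> (`) f ` B" "x \<noteq> y" "x \<in> b1" "y \<in> b1" "x \<in> b2" "y \<in> b2"
  obtain c1 where c1: "c1 \<in> B" "b1 = f ` c1" using H by blast
  obtain c2 where c2: "c2 \<in> B" "b2 = f ` c2" using H by blast
  obtain x0 where x0: "x0 \<in> c1" "x = f x0" using H c1 by blast
  obtain y0 where y0: "y0 \<in> c1" "y = f y0" using H c1 by blast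
  have "x0 \<in> c2" "y0 \<in> c2" using H c2 x0 y0 f by (auto simp: inj_image_mem_iff)
  moreover have "x0 \<noteq> y0" using H x0 y0 by auto
  ultimately have "c1 = c2" using pbd2D(6)[OF P c1(1) c2(1)] x0 y0 by blast
  then show "b1 = b2" using c1 c2 by simp
qed
lemma sipf_image:
  assumes f: "inj f" and P: "pbd2 X B v K"
  shows "sets_in_proper_flats (f ` X) ((`) f ` B) d \<longleftrightarrow> sets_in_proper_flats X B d"
proof -
  have P': "pbd2 (f ` X) ((`) f ` B) v K" by (rule pbd2_image[OF f P])
  have inj: "inj_on f A" for A using f inj_on_subset by blast
  show ?thesis
  proof
    assume s: "sets_in_proper_flats (f ` X) ((`) f ` B) d"
    show "sets_in_proper_flats X B d" unfolding sets_in_proper_flats_def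
    proof (intro allI impI)
      fix S assume S: "S \<subseteq> X \<and> card S = d"
      then have "f ` S \<subseteq> f ` X \<and> card (f ` S) = d" using inj by (auto simp: card_image)
      then obtain Y' where Y': "is_proper_flat (f ` X) ((`) f ` B) Y'" "f ` S \<subseteq> Y'"
        using s[unfolded sets_in_proper_flats_def, rule_format, of "f ` S"] by blast
      then have Y'': "Y' \<subseteq> f ` X" "closedB ((`) f ` B) Y'" "Y' \<noteq> f ` X"
        using pbd2_proper_iff[OF P'] by auto
      then obtain Y where Y: "Y \<subseteq> X" "Y' = f ` Y" by (meson subset_imageE)
      have "closedB B Y" using Y'' Y closedB_image[OF f] by simp
      moreover have "Y \<noteq> X" using Y'' Y by auto
      moreover have "S \<subseteq> Y" using Y'(2) Y f by (simp add: inj_image_subset_iff)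
      ultimately show "\<exists>Y. is_proper_flat X B Y \<and> S \<subseteq> Y"
        using Y pbd2_proper_iff[OF P, of Y] by blast
    qed
  next
    assume s: "sets_in_proper_flats X B d"
    show "sets_in_proper_flats (f ` X) ((`) f ` B) d" unfolding sets_in_proper_flats_def
    proof (intro allI impI)
      fix S' assume S': "S' \<subseteq> f ` X \<and> card S' = d"
      then obtain S where S: "S \<subseteq> X" "S' = f ` S" by (meson subset_imageE)
      then have "card S = d" using S' inj by (simp add: card_image)
      then obtain Y where Y: "is_proper_flat X B Y" "S \<subseteq> Y"
        using s[unfolded sets_in_proper_flats_def, rule_format, of S] S by blast
      then have Y'': "Y \<subseteq> X" "closedB B Y" "Y \<noteq> X" using pbd2_proper_iff[OF P] by auto
      have "f ` Y \<subseteq> f ` X" using Y'' by auto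
      moreover have "closedB ((`) f ` B) (f ` Y)" using Y'' closedB_image[OF f] by simp
      moreover have "f ` Y \<noteq> f ` X" using Y'' f by (simp add: inj_image_eq_iff)
      moreover have "S' \<subseteq> f ` Y" using S Y by auto
      ultimately show "\<exists>Y. is_proper_flat (f ` X) ((`) f ` B) Y \<and> S' \<subseteq> Y"
        using pbd2_proper_iff[OF P', of "f ` Y"] by blast
    qed
  qed
qed

lemma dim_image:
  assumes f: "inj f" and P: "pbd2 X B v K"
  shows "pbd_dimension (f ` X) ((`) f ` B) = pbd_dimension X B"
proof -
  have "inj_on f X" using f inj_on_subset by blast
  then have "card (f ` X) = card X" by (rule card_image)
  then show ?thesis unfolding pbd_dimension_def using sipf_image[OF f P] by simp
qed

datatype pt = Wp nat | Gp nat nat nat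

definition Wset :: "pt set" where "Wset = Wp ` {..<5}"
lemma Wset_mem[simp]: "Wp j \<in> Wset \<longleftrightarrow> j < 5" "Gp i t u \<notin> Wset" by (auto simp: Wset_def)
lemma Wset_cases: "x \<in> Wset \<Longrightarrow> \<exists>a. x = Wp a \<and> a < 5" by (auto simp: Wset_def)

definition grp :: "nat \<Rightarrow> nat \<Rightarrow> pt set" where "grp ub i = {Gp i t u | t u. t < 3 \<and> u < ub}"
lemma grp_mem[simp]: "Gp i' t u \<in> grp ub i \<longleftrightarrow> i' = i \<and> t < 3 \<and> u < ub" "Wp j \<notin> grp ub i"
  by (auto simp: grp_def)

definition Xp :: "nat \<Rightarrow> nat \<Rightarrow> pt set" where "Xp nb ub = Wset \<union> (\<Union>i\<in>{1..<nb}. grp ub i)"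
lemma Xp_mem[simp]: "Wp j \<in> Xp nb ub \<longleftrightarrow> j < 5" "Gp i t u \<in> Xp nb ub \<longleftrightarrow> 1 \<le> i \<and> i < nb \<and> t < 3 \<and> u < ub"
  by (auto simp: Xp_def)

definition X0 :: "nat \<Rightarrow> pt set" where "X0 ub = Wset \<union> grp ub 0"
lemma X0_mem[simp]: "Wp j \<in> X0 ub \<longleftrightarrow> j < 5" "Gp i t u \<in> X0 ub \<longleftrightarrow> i = 0 \<and> t < 3 \<and> u < ub"
  by (auto simp: X0_def)

fun lift :: "nat \<Rightarrow> pt \<Rightarrow> pt" where "lift i (Wp j) = Wp j" | "lift i (Gp k t u) = Gp i t u"
fun unlift :: "pt \<Rightarrow> pt" where "unlift (Wp j) = Wp j" | "unlift (Gp k t u) = Gp 0 t u"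

lemma lift_eq_W: "lift i x = Wp j \<longleftrightarrow> x = Wp j" by (cases x) auto
lemma lift_eq_G: "lift i x = Gp i' t u \<longleftrightarrow> i' = i \<and> (\<exists>k. x = Gp k t u)" by (cases x) auto

lemma lift_W[simp]: "Wp j \<in> lift i ` c \<longleftrightarrow> Wp j \<in> c"
proof
  assume "Wp j \<in> lift i ` c"
  then obtain x where "x \<in> c" "lift i x = Wp j" by force
  then show "Wp j \<in> c" using lift_eq_W by auto
next
  assume "Wp j \<in> c" then show "Wp j \<in> lift i ` c" by (force intro: image_eqI[where x="Wp j"])
qed

lemma lift_G:
  assumes "c \<subseteq> X0 ub" shows "Gp i' t u \<in> lift i ` c \<longleftrightarrow> i' = i \<and> Gp 0 t u \<in> c"
proof
  assume "Gp i' t u \<in> lift i ` c"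
  then obtain x where x: "x \<in> c" "lift i x = Gp i' t u" by force
  then obtain k where k: "i' = i" "x = Gp k t u" using lift_eq_G by blast
  moreover have "x \<in> X0 ub" using x assms by blast
  ultimately show "i' = i \<and> Gp 0 t u \<in> c" using x by auto
next
  assume "i' = i \<and> Gp 0 t u \<in> c"
  then show "Gp i' t u \<in> lift i ` c" by (force intro: image_eqI[where x="Gp 0 t u"])
qed

lemma lift_unlift: "c \<subseteq> X0 ub \<Longrightarrow> x \<in> lift i ` c \<Longrightarrow> unlift x \<in> c \<and> lift i (unlift x) = x"
  by (cases x) (auto simp: lift_G)

lemma lift_idx: "c \<subseteq> X0 ub \<Longrightarrow> Gp a t u \<in> lift i ` c \<Longrightarrow> a = i"
  by (simp add: lift_G)

fun third :: "pt \<Rightarrow> pt \<Rightarrow> pt" where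
  "third (Gp a t u) (Gp b s v) = Gp (xor a b) ((2*(t+s)) mod 3) (xor u v)"
| "third _ _ = Wp 0"

definition tdb :: "nat \<Rightarrow> nat \<Rightarrow> nat \<Rightarrow> nat \<Rightarrow> nat \<Rightarrow> nat \<Rightarrow> pt set" where
  "tdb i t u j s v = {Gp i t u, Gp j s v, third (Gp i t u) (Gp j s v)}"

lemma lt3: "(t::nat) < 3 \<longleftrightarrow> t = 0 \<or> t = 1 \<or> t = 2" by auto

lemma m3A: "t < 3 \<Longrightarrow> s < 3 \<Longrightarrow> (2 * (s + (2 * (t + s)) mod 3)) mod 3 = (t::nat)"
  by (auto simp: lt3)
lemma m3B: "t < 3 \<Longrightarrow> s < 3 \<Longrightarrow> (2 * ((2 * (t + s)) mod 3 + s)) mod 3 = (t::nat)"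
  by (auto simp: lt3)
lemma m3C: "t < 3 \<Longrightarrow> s < 3 \<Longrightarrow> (2 * (t + (2 * (t + s)) mod 3)) mod 3 = (s::nat)"
  by (auto simp: lt3)
lemma m3D: "t < 3 \<Longrightarrow> s < 3 \<Longrightarrow> (2 * ((2 * (t + s)) mod 3 + t)) mod 3 = (s::nat)"
  by (auto simp: lt3)

lemma tdb_Gp: "x \<in> tdb i t u j s v \<Longrightarrow> \<exists>a t' u'. x = Gp a t' u'" by (auto simp: tdb_def)

lemma tdb_pair:
  assumes x: "x \<in> tdb i t u j s v" and y: "y \<in> tdb i t u j s v" and xy: "x \<noteq> y"
    and ij: "i \<noteq> j" "i \<noteq> 0" "j \<noteq> 0" and ts: "t < 3" "s < 3"
  shows "\<exists>a t1 u1 b t2 u2. x = Gp a t1 u1 \<and> y = Gp b t2 u2 \<and> a \<noteq> b \<and> tdb i t u j s v = {x, y, third x y}"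
proof -
  let ?P1 = "Gp i t u" and ?P2 = "Gp j s v" and ?P3 = "Gp (xor i j) ((2*(t+s)) mod 3) (xor u v)"
  have T: "tdb i t u j s v = {?P1, ?P2, ?P3}" by (simp add: tdb_def)
  have t12: "third ?P1 ?P2 = ?P3" by simp
  have t21: "third ?P2 ?P1 = ?P3" by (simp add: xor.commute add.commute)
  have t23: "third ?P2 ?P3 = ?P1" by (simp only: third.simps m3A[OF ts] xor_cancel1 xor_cancel2 xor_cancel3 xor_cancel4)
  have t32: "third ?P3 ?P2 = ?P1" by (simp only: third.simps m3B[OF ts] xor_cancel1 xor_cancel2 xor_cancel3 xor_cancel4)
  have t13: "third ?P1 ?P3 = ?P2" by (simp only: third.simps m3C[OF ts] xor_cancel1 xor_cancel2 xor_cancel3 xor_cancel4)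
  have t31: "third ?P3 ?P1 = ?P2" by (simp only: third.simps m3D[OF ts] xor_cancel1 xor_cancel2 xor_cancel3 xor_cancel4)
  have d: "i \<noteq> xor i j" "j \<noteq> xor i j" using ij by (metis xor_eq_left, metis xor_eq_right)
  have xs: "x = ?P1 \<or> x = ?P2 \<or> x = ?P3" using x T by simp
  have ys: "y = ?P1 \<or> y = ?P2 \<or> y = ?P3" using y T by simp
  from xs ys xy show ?thesis
  proof (elim disjE)
    assume H: "x = ?P1" "y = ?P2"
    have "tdb i t u j s v = {x, y, third x y}" unfolding H t12 T by auto
    then show ?thesis using H ij ij by auto
  next
    assume H: "x = ?P1" "y = ?P3"
    have "tdb i t u j s v = {x, y, third x y}" unfolding H t13 T by auto
    then show ?thesis using H d ij by auto
  next
    assume H: "x = ?P2" "y = ?P1"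
    have "tdb i t u j s v = {x, y, third x y}" unfolding H t21 T by auto
    then show ?thesis using H ij ij by auto
  next
    assume H: "x = ?P2" "y = ?P3"
    have "tdb i t u j s v = {x, y, third x y}" unfolding H t23 T by auto
    then show ?thesis using H d ij by auto
  next
    assume H: "x = ?P3" "y = ?P1"
    have "tdb i t u j s v = {x, y, third x y}" unfolding H t31 T by auto
    then show ?thesis using H d ij by auto
  next
    assume H: "x = ?P3" "y = ?P2"
    have "tdb i t u j s v = {x, y, third x y}" unfolding H t32 T by auto
    then show ?thesis using H d ij by auto
  qed auto
qed

definition Bp :: "nat \<Rightarrow> nat \<Rightarrow> pt set set \<Rightarrow> pt set set" where
  "Bp nb ub GD = insert Wset ({lift i ` c | i c. 1 \<le> i \<and> i < nb \<and> c \<in> GD \<and> c \<noteq> Wset} \<union>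
     {tdb i t u j s v | i t u j s v. 1 \<le> i \<and> i < nb \<and> 1 \<le> j \<and> j < nb \<and> i \<noteq> j \<and> t < 3 \<and> s < 3 \<and> u < ub \<and> v < ub})"

lemma Bp_cases:
  assumes "b \<in> Bp nb ub GD"
  obtains "b = Wset"
  | i c where "b = lift i ` c" "1 \<le> i" "i < nb" "c \<in> GD" "c \<noteq> Wset"
  | i t u j s v where "b = tdb i t u j s v" "1 \<le> i" "i < nb" "1 \<le> j" "j < nb" "i \<noteq> j" "t < 3" "s < 3" "u < ub" "v < ub"
  using assms unfolding Bp_def by auto

lemma Bp_W: "Wset \<in> Bp nb ub GD" by (simp add: Bp_def)
lemma Bp_L: "1 \<le> i \<Longrightarrow> i < nb \<Longrightarrow> c \<in> GD \<Longrightarrow> c \<noteq> Wset \<Longrightarrow> lift i ` c \<in> Bp nb ub GD"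
  unfolding Bp_def by blast
lemma Bp_T: "1 \<le> i \<Longrightarrow> i < nb \<Longrightarrow> 1 \<le> j \<Longrightarrow> j < nb \<Longrightarrow> i \<noteq> j \<Longrightarrow> t < 3 \<Longrightarrow> s < 3 \<Longrightarrow> u < ub \<Longrightarrow> v < ub
   \<Longrightarrow> tdb i t u j s v \<in> Bp nb ub GD"
  unfolding Bp_def
  apply (rule insertI2, rule UnI2, rule CollectI)
  apply (rule exI[of _ i], rule exI[of _ t], rule exI[of _ u], rule exI[of _ j], rule exI[of _ s], rule exI[of _ v])
  by simp

lemma xor_eq_left'[simp]: "(a::nat) = xor a b \<longleftrightarrow> b = 0" by (metis xor_eq_left)
lemma xor_eq_right'[simp]: "(b::nat) = xor a b \<longleftrightarrow> a = 0" by (metis xor_eq_right)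

lemma tdb_mem: "Gp i t u \<in> tdb i t u j s v" "Gp j s v \<in> tdb i t u j s v" by (auto simp: tdb_def)

definition comb :: "nat\<Rightarrow>nat\<Rightarrow>nat\<Rightarrow>bool\<times>bool\<times>bool \<Rightarrow> nat" where
 "comb i j k \<alpha> = (case \<alpha> of (a,b,c) \<Rightarrow> xor (if a then i else 0) (xor (if b then j else 0) (if c then k else 0)))"
fun xv :: "bool\<times>bool\<times>bool \<Rightarrow> bool\<times>bool\<times>bool \<Rightarrow> bool\<times>bool\<times>bool" where
 "xv (a,b,c) (a',b',c') = (a\<noteq>a', b\<noteq>b', c\<noteq>c')"
lemma comb_xor: "xor (comb i j k \<alpha>) (comb i j k \<beta>) = comb i j k (xv \<alpha> \<beta>)"
  by (cases \<alpha>; cases \<beta>) (auto simp: comb_def xor.assoc xor.left_commute xor.commute)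
lemma xv_0: "xv \<alpha> \<beta> = (False,False,False) \<longleftrightarrow> \<alpha> = \<beta>"
  by (cases \<alpha>; cases \<beta>) auto
lemma comb_simps[simp]: "comb i j k (False,False,False) = 0" "comb i j k (True,False,False) = i"
  "comb i j k (False,True,False) = j" "comb i j k (False,False,True) = k"
  by (simp_all add: comb_def)
lemma comb_lt:
  assumes "i < N" "j < N" "k < N" "0 < N" "\<And>a b. a < N \<Longrightarrow> b < N \<Longrightarrow> xor a b < N"
  shows "comb i j k \<alpha> < N"
proof -
  obtain a b c where \<alpha>: "\<alpha> = (a,b,c)" by (cases \<alpha>) auto
  have "(if a then i else 0) < N" "(if b then j else 0) < N" "(if c then k else 0) < N" using assms by auto
  then show ?thesis unfolding \<alpha> comb_def using assms(5) by simp
qed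

definition indep :: "nat \<Rightarrow> nat \<Rightarrow> nat \<Rightarrow> bool" where
  "indep i j k \<longleftrightarrow> (\<forall>\<alpha>. \<alpha> \<noteq> (False,False,False) \<longrightarrow> comb i j k \<alpha> \<noteq> 0)"

lemma comb_inj: assumes "indep i j k" "comb i j k \<alpha> = comb i j k \<beta>" shows "\<alpha> = \<beta>"
proof -
  have "comb i j k (xv \<alpha> \<beta>) = 0" using comb_xor[of i j k \<alpha> \<beta>] assms(2) by simp
  then have "xv \<alpha> \<beta> = (False,False,False)" using assms(1) unfolding indep_def by blast
  then show ?thesis using xv_0 by simp
qed

definition spanH :: "nat \<Rightarrow> nat \<Rightarrow> nat \<Rightarrow> nat set" where
  "spanH i j k = comb i j k ` UNIV - {0}"

lemma span_closed: assumes "a \<in> spanH i j k" "b \<in> spanH i j k" "a \<noteq> b" shows "xor a b \<in> spanH i j k"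
proof -
  obtain \<alpha> \<beta> where "a = comb i j k \<alpha>" "b = comb i j k \<beta>" using assms unfolding spanH_def by blast
  then have "xor a b = comb i j k (xv \<alpha> \<beta>)" by (simp add: comb_xor)
  moreover have "xor a b \<noteq> 0" using assms(3) by simp
  ultimately show ?thesis unfolding spanH_def by auto
qed

lemma span_has1: "i \<noteq> 0 \<Longrightarrow> i \<in> spanH i j k"
  unfolding spanH_def by (rule DiffI, rule image_eqI[where x="(True,False,False)"]) simp_all
lemma span_has2: "j \<noteq> 0 \<Longrightarrow> j \<in> spanH i j k"
  unfolding spanH_def by (rule DiffI, rule image_eqI[where x="(False,True,False)"]) simp_all
lemma span_has3: "k \<noteq> 0 \<Longrightarrow> k \<in> spanH i j k"
  unfolding spanH_def by (rule DiffI, rule image_eqI[where x="(False,False,True)"]) simp_all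

lemma UNIV_b3: "(UNIV :: (bool\<times>bool\<times>bool) set) = set [(False,False,False),(False,False,True),(False,True,False),
   (False,True,True),(True,False,False),(True,False,True),(True,True,False),(True,True,True)]"
proof (rule set_eqI)
  fix x :: "bool\<times>bool\<times>bool" show "x \<in> UNIV \<longleftrightarrow> x \<in> set [(False,False,False),(False,False,True),(False,True,False),
   (False,True,True),(True,False,False),(True,False,True),(True,True,False),(True,True,True)]"
    by (cases x) auto
qed

lemma span_card: "card (spanH i j k) \<le> 7"
proof -
  have f: "finite (comb i j k ` UNIV)" by (simp add: UNIV_b3)
  have "card (comb i j k ` UNIV) \<le> card (UNIV :: (bool\<times>bool\<times>bool) set)"
    by (rule card_image_le) (simp add: UNIV_b3)
  also have "\<dots> \<le> 8" unfolding UNIV_b3 by (rule order_trans[OF card_length]) simp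
  finally have c8: "card (comb i j k ` UNIV) \<le> 8" .
  have "0 \<in> comb i j k ` UNIV" by (rule image_eqI[where x="(False,False,False)"]) simp_all
  then have "card (spanH i j k) = card (comb i j k ` UNIV) - 1" unfolding spanH_def using f by simp
  then show ?thesis using c8 by simp
qed

lemma span_small:
  assumes "\<not> indep i j k" shows "card (spanH i j k) \<le> 3"
proof -
  obtain \<alpha> where \<alpha>: "\<alpha> \<noteq> (False,False,False)" "comb i j k \<alpha> = 0" using assms unfolding indep_def by blast
  have "\<exists>p q. \<forall>\<beta>. comb i j k \<beta> \<in> {0, p, q, xor p q}"
  proof -
    obtain a b c where abc: "\<alpha> = (a,b,c)" by (cases \<alpha>) auto
    show ?thesis
    proof (cases a)
      case True
      show ?thesis
      proof (cases b)
        case True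
        show ?thesis
        proof (cases c)
          case True
          then have "xor i j = k" using \<alpha> abc \<open>a\<close> \<open>b\<close> by (simp add: comb_def xor.assoc[symmetric])
          then have "i = xor j k" by (metis xor_cancel2)
          then show ?thesis
            by (intro exI[of _ j] exI[of _ k] allI, case_tac \<beta>)
               (auto simp: comb_def xor.assoc xor.left_commute xor.commute)
        next
          case False
          then have "i = j" using \<alpha> abc \<open>a\<close> \<open>b\<close> by (simp add: comb_def)
          then show ?thesis
            by (intro exI[of _ j] exI[of _ k] allI, case_tac \<beta>)
               (auto simp: comb_def xor.assoc xor.left_commute xor.commute)
        qed
      next
        case False
        show ?thesis
        proof (cases c)
          case True
          then have "i = k" using \<alpha> abc \<open>a\<close> \<open>\<not>b\<close> by (simp add: comb_def)
          then show ?thesis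
            by (intro exI[of _ j] exI[of _ k] allI, case_tac \<beta>)
               (auto simp: comb_def xor.assoc xor.left_commute xor.commute)
        next
          case False
          then have "i = 0" using \<alpha> abc \<open>a\<close> \<open>\<not>b\<close> by (simp add: comb_def)
          then show ?thesis
            by (intro exI[of _ j] exI[of _ k] allI, case_tac \<beta>)
               (auto simp: comb_def xor.assoc xor.left_commute xor.commute)
        qed
      qed
    next
      case False
      show ?thesis
      proof (cases b)
        case True
        show ?thesis
        proof (cases c)
          case True
          then have "j = k" using \<alpha> abc \<open>\<not>a\<close> \<open>b\<close> by (simp add: comb_def)
          then show ?thesis
            by (intro exI[of _ i] exI[of _ k] allI, case_tac \<beta>)
               (auto simp: comb_def xor.assoc xor.left_commute xor.commute)
        next
          case False
          then have "j = 0" using \<alpha> abc \<open>\<not>a\<close> \<open>b\<close> by (simp add: comb_def)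
          then show ?thesis
            by (intro exI[of _ i] exI[of _ k] allI, case_tac \<beta>)
               (auto simp: comb_def xor.assoc xor.left_commute xor.commute)
        qed
      next
        case False
        then have "c" using \<alpha> abc \<open>\<not>a\<close> by auto
        then have "k = 0" using \<alpha> abc \<open>\<not>a\<close> \<open>\<not>b\<close> by (simp add: comb_def)
        then show ?thesis
          by (intro exI[of _ i] exI[of _ j] allI, case_tac \<beta>)
             (auto simp: comb_def xor.assoc xor.left_commute xor.commute)
      qed
    qed
  qed
  then obtain p q where pq: "\<And>\<beta>. comb i j k \<beta> \<in> {0, p, q, xor p q}" by blast
  have "spanH i j k \<subseteq> set [p, q, xor p q]" unfolding spanH_def using pq by auto
  then have "card (spanH i j k) \<le> card (set [p, q, xor p q])" by (rule card_mono[rotated]) simp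
  also have "\<dots> \<le> 3" by (rule order_trans[OF card_length]) simp
  finally show ?thesis .
qed

fun idx_ok :: "nat \<Rightarrow> pt \<Rightarrow> bool" where
  "idx_ok i (Wp _) = True" | "idx_ok i (Gp a _ _) = (a = i)"

definition YH :: "nat \<Rightarrow> nat set \<Rightarrow> pt set" where "YH ub H = Wset \<union> (\<Union>i\<in>H. grp ub i)"
lemma YH_mem[simp]: "Wp j \<in> YH ub H \<longleftrightarrow> j < 5" "Gp i t u \<in> YH ub H \<longleftrightarrow> i \<in> H \<and> t < 3 \<and> u < ub"
  by (auto simp: YH_def)

definition YT :: "nat\<Rightarrow>nat\<Rightarrow>nat\<Rightarrow>nat\<Rightarrow>nat\<Rightarrow>nat \<Rightarrow> pt set" where
  "YT i j k u1 u2 u3 = {Gp (comb i j k \<alpha>) t (comb u1 u2 u3 \<alpha>) | \<alpha> t. \<alpha> \<noteq> (False,False,False) \<and> t < 3}"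
lemma YT_mem: "p \<in> YT i j k u1 u2 u3 \<longleftrightarrow> (\<exists>\<alpha> t. \<alpha> \<noteq> (False,False,False) \<and> t < 3 \<and> p = Gp (comb i j k \<alpha>) t (comb u1 u2 u3 \<alpha>))"
  by (auto simp: YT_def)
lemma YT_W[simp]: "Wp a \<notin> YT i j k u1 u2 u3" by (auto simp: YT_def)

locale infl =
  fixes nb ub :: nat and GD :: "pt set set"
  assumes nb2: "2 \<le> nb" and ub1: "1 \<le> ub"
  and xnb: "\<And>a b. a < nb \<Longrightarrow> b < nb \<Longrightarrow> xor a b < nb"
  and xub: "\<And>a b. a < ub \<Longrightarrow> b < ub \<Longrightarrow> xor a b < ub"
  and GW: "Wset \<in> GD"
  and Gsub: "\<And>c. c \<in> GD \<Longrightarrow> c \<subseteq> X0 ub"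
  and Gcard: "\<And>c. c \<in> GD \<Longrightarrow> card c = 3 \<or> card c = 5"
  and Gex: "\<And>x y. x \<in> X0 ub \<Longrightarrow> y \<in> X0 ub \<Longrightarrow> x \<noteq> y \<Longrightarrow> \<exists>c\<in>GD. x \<in> c \<and> y \<in> c"
  and Gun: "\<And>c c' x y. c \<in> GD \<Longrightarrow> c' \<in> GD \<Longrightarrow> x \<noteq> y \<Longrightarrow> x \<in> c \<Longrightarrow> y \<in> c \<Longrightarrow> x \<in> c' \<Longrightarrow> y \<in> c' \<Longrightarrow> c = c'"
begin

lemma oneW: assumes c: "c \<in> GD" "c \<noteq> Wset" and ab: "Wp a \<in> c" "Wp b \<in> c" shows "a = b"
proof (rule ccontr)
  assume ne: "a \<noteq> b"
  have "Wp a \<in> X0 ub" "Wp b \<in> X0 ub" using ab Gsub[OF c(1)] by auto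
  then have "Wp a \<in> Wset" "Wp b \<in> Wset" by auto
  then have "c = Wset" using Gun[OF c(1) GW, of "Wp a" "Wp b"] ne ab by simp
  with c show False by simp
qed

lemma LW: assumes c: "c \<in> GD" "c \<noteq> Wset" and xy: "x \<in> lift i ` c" "y \<in> lift i ` c" "x \<in> Wset" "y \<in> Wset"
  shows "x = y"
proof -
  obtain a where a: "x = Wp a" using Wset_cases xy(3) by blast
  obtain b where b: "y = Wp b" using Wset_cases xy(4) by blast
  have "Wp a \<in> c" "Wp b \<in> c" using xy a b by auto
  then have "a = b" using oneW c by blast
  then show ?thesis using a b by simp
qed

lemma lift_notW: assumes c: "c \<in> GD" and p: "p \<in> lift i ` c" "p \<notin> Wset" shows "\<exists>t u. p = Gp i t u"
proof (cases p)
  case (Wp j)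
  then have "Wp j \<in> c" using p by simp
  then have "Wp j \<in> X0 ub" using Gsub[OF c] by blast
  then show ?thesis using p Wp by simp
next
  case (Gp a t u)
  then have "a = i" using lift_idx[OF Gsub[OF c]] p by blast
  then show ?thesis using Gp by blast
qed

lemma lift_inj: "inj_on (lift i) (X0 ub)"
proof (rule inj_onI)
  fix x y assume "x \<in> X0 ub" "y \<in> X0 ub" "lift i x = lift i y"
  then show "x = y" by (cases x; cases y) auto
qed

lemma lift_card: "c \<in> GD \<Longrightarrow> card (lift i ` c) = card c"
  by (rule card_image, rule inj_on_subset[OF lift_inj Gsub])

lemma lift_sub: assumes "1 \<le> i" "i < nb" "c \<in> GD" shows "lift i ` c \<subseteq> Xp nb ub"
proof
  fix x assume "x \<in> lift i ` c"
  then obtain x0 where x0: "x0 \<in> c" "x = lift i x0" by blast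
  then have "x0 \<in> X0 ub" using Gsub[OF assms(3)] by blast
  then show "x \<in> Xp nb ub" using x0 assms by (cases x0) auto
qed

lemma tdb_sub: assumes "1 \<le> i" "i < nb" "1 \<le> j" "j < nb" "i \<noteq> j" "t < 3" "s < 3" "u < ub" "v < ub"
  shows "tdb i t u j s v \<subseteq> Xp nb ub"
proof -
  have nz: "xor i j \<noteq> 0" using assms by simp
  then have "Suc 0 \<le> xor i j" by (metis Suc_le_eq neq0_conv)
  moreover have "xor i j < nb" "xor u v < ub" using assms xnb xub by auto
  ultimately show ?thesis using assms by (auto simp: tdb_def)
qed

lemma tdb_card: assumes "i \<noteq> j" "i \<noteq> 0" "j \<noteq> 0" shows "card (tdb i t u j s v) = 3"
  using assms by (simp add: tdb_def)

lemma Bp_ex: assumes x: "x \<in> Xp nb ub" and y: "y \<in> Xp nb ub" and xy: "x \<noteq> y"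
  shows "\<exists>b\<in>Bp nb ub GD. x \<in> b \<and> y \<in> b"
proof -
  have LL: "\<exists>b\<in>Bp nb ub GD. p \<in> b \<and> q \<in> b"
    if pq: "unlift p \<in> X0 ub" "unlift q \<in> X0 ub" "unlift p \<noteq> unlift q" "1 \<le> i" "i < nb"
       "idx_ok i p" "idx_ok i q" "\<not> (p \<in> Wset \<and> q \<in> Wset)" for p q i
  proof -
    obtain c where c: "c \<in> GD" "unlift p \<in> c" "unlift q \<in> c" using Gex[OF pq(1,2,3)] by blast
    have "c \<noteq> Wset"
    proof
      assume "c = Wset"
      then have up: "unlift p \<in> Wset" "unlift q \<in> Wset" using c by auto
      have "p \<in> Wset" using up(1) by (cases p) auto
      moreover have "q \<in> Wset" using up(2) by (cases q) auto
      ultimately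
      show False using pq by blast
    qed
    then have "lift i ` c \<in> Bp nb ub GD" using Bp_L pq c by blast
    moreover have "p \<in> lift i ` c" using c pq(6) by (cases p) (auto simp: lift_G[OF Gsub[OF c(1)]])
    moreover have "q \<in> lift i ` c" using c pq(7) by (cases q) (auto simp: lift_G[OF Gsub[OF c(1)]])
    ultimately show ?thesis by blast
  qed
  show ?thesis
  proof (cases x)
    case (Wp a)
    show ?thesis
    proof (cases y)
      case (Wp b)
      show ?thesis
      proof (rule bexI[OF _ Bp_W])
        show "x \<in> Wset \<and> y \<in> Wset" using Wp \<open>x = Wp a\<close> x y by simp
      qed
    next
      case (Gp i t u)
      show ?thesis by (rule LL[of x y i]) (use x y Gp \<open>x = Wp a\<close> in auto)
    qed
  next
    case (Gp i t u)
    show ?thesis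
    proof (cases y)
      case (Wp b)
      show ?thesis by (rule LL[of x y i]) (use x y Wp \<open>x = Gp i t u\<close> in auto)
    next
      case (Gp j s v)
      show ?thesis
      proof (cases "i = j")
        case True
        show ?thesis by (rule LL[of x y i]) (use x y Gp \<open>x = Gp i t u\<close> True xy in auto)
      next
        case False
        have "tdb i t u j s v \<in> Bp nb ub GD"
          by (rule Bp_T) (use False x y Gp \<open>x = Gp i t u\<close> in simp_all)
        moreover have "x \<in> tdb i t u j s v" "y \<in> tdb i t u j s v"
          using Gp \<open>x = Gp i t u\<close> tdb_mem by simp_all
        ultimately show ?thesis by blast
      qed
    qed
  qed
qed

lemma H_LL:
  assumes c: "c \<in> GD" "c' \<in> GD" "c \<noteq> Wset" and xy: "x \<noteq> y" "x \<in> lift i ` c" "y \<in> lift i ` c"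
    "x \<in> lift i' ` c'" "y \<in> lift i' ` c'"
  shows "lift i ` c = lift i' ` c'"
proof -
  have s: "c \<subseteq> X0 ub" "c' \<subseteq> X0 ub" using c Gsub by auto
  have u1: "unlift x \<in> c" "lift i (unlift x) = x" using lift_unlift[OF s(1) xy(2)] by auto
  have u2: "unlift y \<in> c" "lift i (unlift y) = y" using lift_unlift[OF s(1) xy(3)] by auto
  have u3: "unlift x \<in> c'" using lift_unlift[OF s(2) xy(4)] by auto
  have u4: "unlift y \<in> c'" using lift_unlift[OF s(2) xy(5)] by auto
  have "unlift x \<noteq> unlift y" using u1 u2 xy(1) by metis
  then have cc: "c = c'" using Gun[OF c(1,2) _ u1(1) u2(1) u3 u4] by blast
  have "x \<notin> Wset \<or> y \<notin> Wset" using LW[OF c(1,3) xy(2,3)] xy(1) by blast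
  then have "i = i'"
  proof
    assume "x \<notin> Wset"
    then obtain t u t' u' where "x = Gp i t u" "x = Gp i' t' u'"
      using lift_notW[OF c(1) xy(2)] lift_notW[OF c(2) xy(4)] by blast
    then show ?thesis by simp
  next
    assume "y \<notin> Wset"
    then obtain t u t' u' where "y = Gp i t u" "y = Gp i' t' u'"
      using lift_notW[OF c(1) xy(3)] lift_notW[OF c(2) xy(5)] by blast
    then show ?thesis by simp
  qed
  then show ?thesis using cc by simp
qed

lemma H_LT:
  assumes c: "c \<in> GD" "c \<noteq> Wset" and xy: "x \<noteq> y" "x \<in> lift i ` c" "y \<in> lift i ` c"
    "x \<in> tdb i1 t1 u1 j1 s1 v1" "y \<in> tdb i1 t1 u1 j1 s1 v1"
    and p: "i1 \<noteq> j1" "i1 \<noteq> 0" "j1 \<noteq> 0" "t1 < 3" "s1 < 3"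
  shows False
proof -
  obtain a ta ua b tb ub' where P: "x = Gp a ta ua" "y = Gp b tb ub'" "a \<noteq> b"
    using tdb_pair[OF xy(4,5) xy(1) p] by blast
  have "x \<notin> Wset" "y \<notin> Wset" using P by auto
  then obtain t u t' u' where "x = Gp i t u" "y = Gp i t' u'"
    using lift_notW[OF c(1) xy(2)] lift_notW[OF c(1) xy(3)] by blast
  then show False using P by simp
qed

lemma WT_contra: "x \<in> Wset \<Longrightarrow> x \<in> tdb i t u j s v \<Longrightarrow> False"
  using tdb_Gp[of x i t u j s v] by auto

lemma Bp_un:
  assumes b: "b \<in> Bp nb ub GD" and b': "b' \<in> Bp nb ub GD" and xy: "x \<noteq> y" "x \<in> b" "y \<in> b" "x \<in> b'" "y \<in> b'"
  shows "b = b'"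
  using b
proof (cases rule: Bp_cases)
  case 1
  note bw = 1
  from b' show ?thesis
  proof (cases rule: Bp_cases)
    case 1 then show ?thesis using bw by simp
  next
    case (2 i c)
    have "x = y" by (rule LW[where c=c and i=i and x=x and y=y]) (use 2 xy bw in simp_all)
    then show ?thesis using xy by simp
  next
    case (3 i t u j s v)
    have False by (rule WT_contra[of x i t u j s v]) (use 3 xy bw in simp_all)
    then show ?thesis ..
  qed
next
  case (2 i c)
  note bc = 2
  from b' show ?thesis
  proof (cases rule: Bp_cases)
    case 1
    have "x = y" by (rule LW[where c=c and i=i and x=x and y=y]) (use 1 xy bc in simp_all)
    then show ?thesis using xy by simp
  next
    case (2 i' c')
    have "lift i ` c = lift i' ` c'" by (rule H_LL[of c c' x y i i']) (use 2 xy bc in simp_all)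
    then show ?thesis using 2 bc by simp
  next
    case (3 i1 t u j s v)
    have False by (rule H_LT[of c x y i i1 t u j s v]) (use 3 xy bc in simp_all)
    then show ?thesis ..
  qed
next
  case (3 i t u j s v)
  note bt = 3
  have eb: "b = {x, y, third x y}"
    using tdb_pair[of x i t u j s v y] xy bt by auto
  from b' show ?thesis
  proof (cases rule: Bp_cases)
    case 1
    have False by (rule WT_contra[of x i t u j s v]) (use 1 xy bt in simp_all)
    then show ?thesis ..
  next
    case (2 i' c')
    have False by (rule H_LT[of c' x y i' i t u j s v]) (use 2 xy bt in simp_all)
    then show ?thesis ..
  next
    case (3 i1 t1 u1 j1 s1 v1)
    have "b' = {x, y, third x y}"
      using tdb_pair[of x i1 t1 u1 j1 s1 v1 y] xy 3 by auto
    then show ?thesis using eb by simp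
  qed
qed

lemma Wset_card: "card Wset = 5" unfolding Wset_def by (subst card_image) (auto simp: inj_on_def)

lemma Xp_eq: "Xp nb ub = Wset \<union> (\<lambda>(i,t,u). Gp i t u) ` ({1..<nb} \<times> {..<3} \<times> {..<ub})"
proof (rule set_eqI)
  fix x show "x \<in> Xp nb ub \<longleftrightarrow> x \<in> Wset \<union> (\<lambda>(i,t,u). Gp i t u) ` ({1..<nb} \<times> {..<3} \<times> {..<ub})"
    by (cases x) (auto simp: image_iff)
qed

lemma Xp_fin: "finite (Xp nb ub)" unfolding Xp_eq by (simp add: Wset_def)

lemma Xp_card: "card (Xp nb ub) = 5 + (nb - 1) * (3 * ub)"
proof -
  have cW: "card Wset = 5" unfolding Wset_def by (subst card_image) (auto simp: inj_on_def)
  have inj: "inj_on (\<lambda>(i,t,u). Gp i t u) ({1..<nb} \<times> {..<3::nat} \<times> {..<ub})"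
    by (auto simp: inj_on_def)
  have "card ((\<lambda>(i,t,u). Gp i t u) ` ({1..<nb} \<times> {..<3::nat} \<times> {..<ub})) = card ({1..<nb} \<times> {..<3::nat} \<times> {..<ub})"
    by (rule card_image[OF inj])
  also have "\<dots> = (nb - 1) * (3 * ub)" by (simp add: card_cartesian_product)
  finally have cG: "card ((\<lambda>(i,t,u). Gp i t u) ` ({1..<nb} \<times> {..<3::nat} \<times> {..<ub})) = (nb - 1) * (3 * ub)" .
  have d: "Wset \<inter> (\<lambda>(i,t,u). Gp i t u) ` ({1..<nb} \<times> {..<3} \<times> {..<ub}) = {}"
    by (auto simp: Wset_def)
  have fW: "finite Wset" by (simp add: Wset_def)
  have fG: "finite ((\<lambda>(i,t,u). Gp i t u) ` ({1..<nb} \<times> {..<3::nat} \<times> {..<ub}))" by simp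
  show ?thesis unfolding Xp_eq using card_Un_disjoint[OF fW fG d] cW cG by simp
qed

theorem design_pbd: "pbd2 (Xp nb ub) (Bp nb ub GD) (5 + (nb - 1) * (3 * ub)) {3,5}"
proof (rule pbd2I)
  show "finite (Xp nb ub)" by (rule Xp_fin)
  show "card (Xp nb ub) = 5 + (nb - 1) * (3 * ub)" by (rule Xp_card)
next
  fix b assume "b \<in> Bp nb ub GD"
  then show "b \<subseteq> Xp nb ub"
  proof (cases rule: Bp_cases)
    case 1 then show ?thesis by (auto dest: Wset_cases)
  next
    case (2 i c) then show ?thesis using lift_sub by blast
  next
    case (3 i t u j s v) then show ?thesis using tdb_sub by blast
  qed
next
  fix b assume "b \<in> Bp nb ub GD"
  then show "card b \<in> {3,5}"
  proof (cases rule: Bp_cases)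
    case 1 then show ?thesis using Wset_card by simp
  next
    case (2 i c) then show ?thesis using lift_card Gcard by auto
  next
    case (3 i t u j s v) then show ?thesis using tdb_card by simp
  qed
next
  fix x y assume "x \<in> Xp nb ub" "y \<in> Xp nb ub" "x \<noteq> y"
  then show "\<exists>b\<in>Bp nb ub GD. x \<in> b \<and> y \<in> b" by (rule Bp_ex)
next
  fix b b' x y assume "b \<in> Bp nb ub GD" "b' \<in> Bp nb ub GD" "x \<noteq> y" "x \<in> b" "y \<in> b" "x \<in> b'" "y \<in> b'"
  then show "b = b'" by (rule Bp_un)
qed

end

lemma indep_distinct: assumes "indep i j k" shows "i \<noteq> j" "i \<noteq> k" "j \<noteq> k" "i \<noteq> 0" "j \<noteq> 0" "k \<noteq> 0"
proof -
  have "comb i j k (True,True,False) \<noteq> 0" "comb i j k (True,False,True) \<noteq> 0" "comb i j k (False,True,True) \<noteq> 0"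
    "comb i j k (True,False,False) \<noteq> 0" "comb i j k (False,True,False) \<noteq> 0" "comb i j k (False,False,True) \<noteq> 0"
    using assms unfolding indep_def by blast+
  then show "i \<noteq> j" "i \<noteq> k" "j \<noteq> k" "i \<noteq> 0" "j \<noteq> 0" "k \<noteq> 0" by (simp_all add: comb_def)
qed

lemma tdb_pair_obt:
  assumes "x \<in> tdb i t u j s v" "y \<in> tdb i t u j s v" "x \<noteq> y" "i \<noteq> j" "i \<noteq> 0" "j \<noteq> 0" "t < 3" "s < 3"
  obtains a t1 u1 b t2 u2 where "x = Gp a t1 u1" "y = Gp b t2 u2" "a \<noteq> b" "tdb i t u j s v = {x, y, third x y}"
  using tdb_pair[OF assms] by blast

context infl begin

lemma cover_H: "x \<in> Xp nb ub \<Longrightarrow> idx_ok i x \<Longrightarrow> i \<in> H \<Longrightarrow> x \<in> YH ub H" by (cases x) auto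

lemma YH_closed:
  assumes H: "H \<subseteq> {1..<nb}" and cl: "\<And>a b. a \<in> H \<Longrightarrow> b \<in> H \<Longrightarrow> a \<noteq> b \<Longrightarrow> xor a b \<in> H"
  shows "closedB (Bp nb ub GD) (YH ub H)"
  unfolding closedB_def
proof (intro ballI impI)
  fix b x y assume b: "b \<in> Bp nb ub GD" and xy: "x \<in> b" "y \<in> b" "x \<noteq> y" "x \<in> YH ub H" "y \<in> YH ub H"
  from b show "b \<subseteq> YH ub H"
  proof (cases rule: Bp_cases)
    case 1 then show ?thesis by (auto dest: Wset_cases)
  next
    case (2 i c)
    have s: "c \<subseteq> X0 ub" using Gsub 2 by blast
    show ?thesis
    proof (cases "i \<in> H")
      case True
      show ?thesis
      proof
        fix p assume "p \<in> b"
        then have p: "p \<in> lift i ` c" using 2 by simp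
        show "p \<in> YH ub H"
        proof (cases p)
          case (Wp j) then show ?thesis using p s by auto
        next
          case (Gp a t u) then show ?thesis using p s True by (auto simp: lift_G[OF s])
        qed
      qed
    next
      case False
      have "x \<in> Wset"
      proof (rule ccontr)
        assume "x \<notin> Wset"
        then obtain t u where "x = Gp i t u" using lift_notW[of c x i] 2 xy by blast
        then show False using xy False by simp
      qed
      moreover have "y \<in> Wset"
      proof (rule ccontr)
        assume "y \<notin> Wset"
        then obtain t u where "y = Gp i t u" using lift_notW[of c y i] 2 xy by blast
        then show False using xy False by simp
      qed
      ultimately have "x = y" by (intro LW[where c=c and i=i and x=x and y=y]) (use 2 xy in simp_all)
      then show ?thesis using xy by simp
    qed
  next
    case (3 i t u j s v)
    obtain a t1 u1 b' t2 u2 where P: "x = Gp a t1 u1" "y = Gp b' t2 u2" "a \<noteq> b'" "tdb i t u j s v = {x, y, third x y}"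
      by (rule tdb_pair_obt[of x i t u j s v y]) (use 3 xy in simp_all)
    have "a \<in> H" "b' \<in> H" "t1 < 3" "u1 < ub" "t2 < 3" "u2 < ub" using P xy by auto
    then have "third x y \<in> YH ub H" using P cl xub by simp
    then show ?thesis using P xy 3 by auto
  qed
qed

lemma YH_proper:
  assumes H: "H \<subseteq> {1..<nb}" and cl: "\<And>a b. a \<in> H \<Longrightarrow> b \<in> H \<Longrightarrow> a \<noteq> b \<Longrightarrow> xor a b \<in> H"
    and l: "l \<in> {1..<nb}" "l \<notin> H"
  shows "is_proper_flat (Xp nb ub) (Bp nb ub GD) (YH ub H)"
proof -
  have "YH ub H \<subseteq> Xp nb ub"
  proof
    fix p assume "p \<in> YH ub H" then show "p \<in> Xp nb ub" using H by (cases p) auto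
  qed
  moreover have "Gp l 0 0 \<in> Xp nb ub" "Gp l 0 0 \<notin> YH ub H" using l ub1 by auto
  ultimately show ?thesis using pbd2_proper_iff[OF design_pbd] YH_closed[OF H cl] by blast
qed

lemma span_sub: "i < nb \<Longrightarrow> j < nb \<Longrightarrow> k < nb \<Longrightarrow> spanH i j k \<subseteq> {1..<nb}"
proof
  fix a assume "i < nb" "j < nb" "k < nb" "a \<in> spanH i j k"
  then obtain \<alpha> where "a = comb i j k \<alpha>" "a \<noteq> 0" unfolding spanH_def by blast
  moreover have "comb i j k \<alpha> < nb" by (rule comb_lt) (use \<open>i < nb\<close> \<open>j < nb\<close> \<open>k < nb\<close> nb2 xnb in auto)
  ultimately show "a \<in> {1..<nb}" by simp
qed

lemma comb_u_lt: "u1 < ub \<Longrightarrow> u2 < ub \<Longrightarrow> u3 < ub \<Longrightarrow> comb u1 u2 u3 \<alpha> < ub"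
  by (rule comb_lt) (use ub1 xub in auto)

lemma YT_closed:
  assumes ind: "indep i j k" and bd: "u1 < ub" "u2 < ub" "u3 < ub"
    and cos: "\<And>u. u < ub \<Longrightarrow> {Gp 0 0 u, Gp 0 1 u, Gp 0 2 u} \<in> GD"
  shows "closedB (Bp nb ub GD) (YT i j k u1 u2 u3)"
  unfolding closedB_def
proof (intro ballI impI)
  fix b x y assume b: "b \<in> Bp nb ub GD" and xy: "x \<in> b" "y \<in> b" "x \<noteq> y" "x \<in> YT i j k u1 u2 u3" "y \<in> YT i j k u1 u2 u3"
  obtain \<alpha> t where \<alpha>: "\<alpha> \<noteq> (False,False,False)" "t < 3" "x = Gp (comb i j k \<alpha>) t (comb u1 u2 u3 \<alpha>)"
    using xy(4) YT_mem by blast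
  obtain \<beta> t' where \<beta>: "\<beta> \<noteq> (False,False,False)" "t' < 3" "y = Gp (comb i j k \<beta>) t' (comb u1 u2 u3 \<beta>)"
    using xy(5) YT_mem by blast
  from b show "b \<subseteq> YT i j k u1 u2 u3"
  proof (cases rule: Bp_cases)
    case 1 then have "x \<in> Wset" using xy by simp
    then show ?thesis using \<alpha> by simp
  next
    case (2 l c)
    have s: "c \<subseteq> X0 ub" using Gsub 2 by blast
    have "x \<notin> Wset" "y \<notin> Wset" using \<alpha> \<beta> by auto
    then obtain ta ua tb vb where xl: "x = Gp l ta ua" and yl: "y = Gp l tb vb"
      using lift_notW[of c x l] lift_notW[of c y l] 2 xy by blast
    then have cl: "comb i j k \<alpha> = l" "comb i j k \<beta> = l" using \<alpha> \<beta> by auto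
    then have ab: "\<alpha> = \<beta>" using comb_inj[OF ind] by simp
    define w where "w = comb u1 u2 u3 \<alpha>"
    have wl: "w < ub" unfolding w_def by (rule comb_u_lt[OF bd])
    have tt: "t \<noteq> t'" using \<alpha> \<beta> xy ab by auto
    have inc: "Gp 0 t w \<in> c" "Gp 0 t' w \<in> c"
      using xy \<alpha> \<beta> ab cl 2 by (auto simp: lift_G[OF s] w_def)
    have K: "{Gp 0 0 w, Gp 0 1 w, Gp 0 2 w} \<in> GD" using cos wl by blast
    have inK: "Gp 0 t w \<in> {Gp 0 0 w, Gp 0 1 w, Gp 0 2 w}" "Gp 0 t' w \<in> {Gp 0 0 w, Gp 0 1 w, Gp 0 2 w}"
      using \<alpha> \<beta> by (auto simp: lt3)
    have cK: "c = {Gp 0 0 w, Gp 0 1 w, Gp 0 2 w}"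
      using Gun[OF 2(4) K _ inc inK] tt by simp
    show ?thesis
    proof
      fix p assume "p \<in> b"
      then have "p \<in> {Gp l 0 w, Gp l 1 w, Gp l 2 w}" using 2 cK by simp
      then obtain t'' where "t'' < 3" "p = Gp (comb i j k \<alpha>) t'' (comb u1 u2 u3 \<alpha>)"
        using cl w_def by auto
      then show "p \<in> YT i j k u1 u2 u3" using YT_mem \<alpha> by blast
    qed
  next
    case (3 i1 t1 v1 j1 s1 w1)
    obtain a ta ua b' tb ub' where P: "x = Gp a ta ua" "y = Gp b' tb ub'" "a \<noteq> b'" "tdb i1 t1 v1 j1 s1 w1 = {x, y, third x y}"
      by (rule tdb_pair_obt[of x i1 t1 v1 j1 s1 w1 y]) (use 3 xy in simp_all)
    have "comb i j k \<alpha> \<noteq> comb i j k \<beta>" using P \<alpha> \<beta> by auto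
    then have "\<alpha> \<noteq> \<beta>" by auto
    then have nz: "xv \<alpha> \<beta> \<noteq> (False,False,False)" using xv_0 by simp
    have eq: "third x y = Gp (comb i j k (xv \<alpha> \<beta>)) ((2*(t+t')) mod 3) (comb u1 u2 u3 (xv \<alpha> \<beta>))"
      using \<alpha> \<beta> by (simp add: comb_xor)
    have "\<exists>\<gamma> t''. \<gamma> \<noteq> (False,False,False) \<and> t'' < 3 \<and> third x y = Gp (comb i j k \<gamma>) t'' (comb u1 u2 u3 \<gamma>)"
      by (rule exI[of _ "xv \<alpha> \<beta>"], rule exI[of _ "(2*(t+t')) mod 3"]) (simp add: eq nz)
    then have "third x y \<in> YT i j k u1 u2 u3" by (simp only: YT_mem)
    then show ?thesis using P xy 3 by auto
  qed
qed

lemma YT_proper: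
  assumes ind: "indep i j k" and bd: "i < nb" "j < nb" "k < nb" "u1 < ub" "u2 < ub" "u3 < ub" and ub2: "2 \<le> ub"
    and cos: "\<And>u. u < ub \<Longrightarrow> {Gp 0 0 u, Gp 0 1 u, Gp 0 2 u} \<in> GD"
  shows "is_proper_flat (Xp nb ub) (Bp nb ub GD) (YT i j k u1 u2 u3)"
proof -
  have sub: "YT i j k u1 u2 u3 \<subseteq> Xp nb ub"
  proof
    fix p assume "p \<in> YT i j k u1 u2 u3"
    then obtain \<alpha> t where \<alpha>: "\<alpha> \<noteq> (False,False,False)" "t < 3" "p = Gp (comb i j k \<alpha>) t (comb u1 u2 u3 \<alpha>)"
      using YT_mem by blast
    have "comb i j k \<alpha> \<noteq> 0" using ind \<alpha> unfolding indep_def by blast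
    moreover have "comb i j k \<alpha> < nb" by (rule comb_lt) (use bd nb2 xnb in auto)
    moreover have "comb u1 u2 u3 \<alpha> < ub" by (rule comb_u_lt) (use bd in auto)
    ultimately show "p \<in> Xp nb ub" using \<alpha> by simp
  qed
  define w where "w = (if u1 = 0 then 1 else (0::nat))"
  have "i \<noteq> 0" using indep_distinct[OF ind] by simp
  then have inX: "Gp i 0 w \<in> Xp nb ub" using bd ub2 by (simp add: w_def)
  have "Gp i 0 w \<notin> YT i j k u1 u2 u3"
  proof
    assume "Gp i 0 w \<in> YT i j k u1 u2 u3"
    then obtain \<alpha> t where \<alpha>: "Gp i 0 w = Gp (comb i j k \<alpha>) t (comb u1 u2 u3 \<alpha>)"
      using YT_mem by blast
    then have "comb i j k \<alpha> = comb i j k (True,False,False)" by simp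
    then have "\<alpha> = (True,False,False)" using comb_inj[OF ind] by blast
    then have "w = u1" using \<alpha> by simp
    then show False by (simp add: w_def split: if_splits)
  qed
  then show ?thesis using pbd2_proper_iff[OF design_pbd] sub inX YT_closed[OF ind bd(4-6) cos] by blast
qed

end

lemma closedBD: "closedB B Y \<Longrightarrow> b \<in> B \<Longrightarrow> x \<in> b \<Longrightarrow> y \<in> b \<Longrightarrow> x \<noteq> y \<Longrightarrow> x \<in> Y \<Longrightarrow> y \<in> Y \<Longrightarrow> b \<subseteq> Y"
  unfolding closedB_def by blast

context infl begin

lemma triple_idx:
  assumes x: "x \<in> Xp nb ub" and y: "y \<in> Xp nb ub" and z: "z \<in> Xp nb ub"
  obtains i j k where "i \<in> {1..<nb}" "j \<in> {1..<nb}" "k \<in> {1..<nb}" "idx_ok i x" "idx_ok j y" "idx_ok k z"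
    "(\<exists>t1 u1 t2 u2 t3 u3. x = Gp i t1 u1 \<and> y = Gp j t2 u2 \<and> z = Gp k t3 u3) \<or> i = j \<or> i = k \<or> j = k"
proof (cases x)
  case (Wp a)
  show ?thesis
  proof (cases y)
    case (Wp b)
    show ?thesis
    proof (cases z)
      case (Wp c) show ?thesis by (rule that[of 1 1 1]) (use nb2 \<open>x = Wp a\<close> \<open>y = Wp b\<close> Wp in auto)
    next
      case (Gp c t3 u3) show ?thesis by (rule that[of c c c]) (use z \<open>x = Wp a\<close> \<open>y = Wp b\<close> Gp in auto)
    qed
  next
    case (Gp b t2 u2)
    show ?thesis
    proof (cases z)
      case (Wp c) show ?thesis by (rule that[of b b b]) (use y \<open>x = Wp a\<close> \<open>y = Gp b t2 u2\<close> Wp in auto)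
    next
      case (Gp c t3 u3) show ?thesis by (rule that[of b b c]) (use y z \<open>x = Wp a\<close> \<open>y = Gp b t2 u2\<close> Gp in auto)
    qed
  qed
next
  case (Gp a t1 u1)
  show ?thesis
  proof (cases y)
    case (Wp b)
    show ?thesis
    proof (cases z)
      case (Wp c) show ?thesis by (rule that[of a a a]) (use x \<open>x = Gp a t1 u1\<close> \<open>y = Wp b\<close> Wp in auto)
    next
      case (Gp c t3 u3) show ?thesis by (rule that[of a a c]) (use x z \<open>x = Gp a t1 u1\<close> \<open>y = Wp b\<close> Gp in auto)
    qed
  next
    case (Gp b t2 u2)
    show ?thesis
    proof (cases z)
      case (Wp c) show ?thesis by (rule that[of a b a]) (use x y \<open>x = Gp a t1 u1\<close> \<open>y = Gp b t2 u2\<close> Wp in auto)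
    next
      case (Gp c t3 u3) show ?thesis by (rule that[of a b c]) (use x y z \<open>x = Gp a t1 u1\<close> \<open>y = Gp b t2 u2\<close> Gp in auto)
    qed
  qed
qed

lemma three_pts:
  assumes "S \<subseteq> Xp nb ub \<and> card S = 3"
  obtains x y z where "S = {x,y,z}" "x \<in> Xp nb ub" "y \<in> Xp nb ub" "z \<in> Xp nb ub"
proof -
  obtain x y z where "S = {x,y,z}" using assms card_3_iff[of S] by blast
  then show ?thesis using that assms by blast
qed

lemma span_flat:
  assumes ijk: "i \<in> {1..<nb}" "j \<in> {1..<nb}" "k \<in> {1..<nb}" and c: "card (spanH i j k) < nb - 1"
  shows "is_proper_flat (Xp nb ub) (Bp nb ub GD) (YH ub (spanH i j k))"
proof -
  have Hs: "spanH i j k \<subseteq> {1..<nb}" using span_sub ijk by simp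
  have "\<exists>l\<in>{1..<nb}. l \<notin> spanH i j k"
  proof (rule ccontr)
    assume "\<not> (\<exists>l\<in>{1..<nb}. l \<notin> spanH i j k)"
    then have "{1..<nb} \<subseteq> spanH i j k" by blast
    then have "card {1..<nb} \<le> card (spanH i j k)" by (rule card_mono[rotated]) (rule finite_subset[OF Hs], simp)
    then show False using c by simp
  qed
  then obtain l where "l \<in> {1..<nb}" "l \<notin> spanH i j k" by blast
  then show ?thesis using YH_proper[OF Hs span_closed] by blast
qed

lemma span_cover:
  assumes ijk: "i \<in> {1..<nb}" "j \<in> {1..<nb}" "k \<in> {1..<nb}" "idx_ok i x" "idx_ok j y" "idx_ok k z"
    and xyz: "x \<in> Xp nb ub" "y \<in> Xp nb ub" "z \<in> Xp nb ub"
  shows "{x,y,z} \<subseteq> YH ub (spanH i j k)"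
proof -
  have "i \<in> spanH i j k" "j \<in> spanH i j k" "k \<in> spanH i j k"
    using span_has1[of i j k] span_has2[of j i k] span_has3[of k i j] ijk by auto
  then show ?thesis using cover_H ijk xyz by auto
qed

lemma sipf3_big: assumes "9 \<le> nb" shows "sets_in_proper_flats (Xp nb ub) (Bp nb ub GD) 3"
  unfolding sets_in_proper_flats_def
proof (intro allI impI)
  fix S assume S: "S \<subseteq> Xp nb ub \<and> card S = 3"
  then obtain x y z where xyz: "S = {x,y,z}" "x \<in> Xp nb ub" "y \<in> Xp nb ub" "z \<in> Xp nb ub" by (rule three_pts)
  obtain i j k where ijk: "i \<in> {1..<nb}" "j \<in> {1..<nb}" "k \<in> {1..<nb}" "idx_ok i x" "idx_ok j y" "idx_ok k z"
    by (rule triple_idx[OF xyz(2-4)])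
  have "card (spanH i j k) \<le> 7" by (rule span_card)
  then have "card (spanH i j k) < nb - 1" using assms by linarith
  then have "is_proper_flat (Xp nb ub) (Bp nb ub GD) (YH ub (spanH i j k))" using span_flat ijk by blast
  moreover have "S \<subseteq> YH ub (spanH i j k)" using span_cover ijk xyz by simp
  ultimately show "\<exists>Y. is_proper_flat (Xp nb ub) (Bp nb ub GD) Y \<and> S \<subseteq> Y" by blast
qed

lemma sipf3_cos:
  assumes nb5: "5 \<le> nb" and ub2: "2 \<le> ub" and cos: "\<And>u. u < ub \<Longrightarrow> {Gp 0 0 u, Gp 0 1 u, Gp 0 2 u} \<in> GD"
  shows "sets_in_proper_flats (Xp nb ub) (Bp nb ub GD) 3"
  unfolding sets_in_proper_flats_def
proof (intro allI impI)
  fix S assume S: "S \<subseteq> Xp nb ub \<and> card S = 3"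
  then obtain x y z where xyz: "S = {x,y,z}" "x \<in> Xp nb ub" "y \<in> Xp nb ub" "z \<in> Xp nb ub" by (rule three_pts)
  obtain i j k where ijk: "i \<in> {1..<nb}" "j \<in> {1..<nb}" "k \<in> {1..<nb}" "idx_ok i x" "idx_ok j y" "idx_ok k z"
    "(\<exists>t1 u1 t2 u2 t3 u3. x = Gp i t1 u1 \<and> y = Gp j t2 u2 \<and> z = Gp k t3 u3) \<or> i = j \<or> i = k \<or> j = k"
    using triple_idx[OF xyz(2-4)] by blast
  show "\<exists>Y. is_proper_flat (Xp nb ub) (Bp nb ub GD) Y \<and> S \<subseteq> Y"
  proof (cases "indep i j k")
    case True
    then have "i \<noteq> j" "i \<noteq> k" "j \<noteq> k" using indep_distinct by auto
    then obtain t1 u1 t2 u2 t3 u3 where P: "x = Gp i t1 u1" "y = Gp j t2 u2" "z = Gp k t3 u3" using ijk by blast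
    have b: "u1 < ub" "u2 < ub" "u3 < ub" "t1 < 3" "t2 < 3" "t3 < 3" using P xyz by auto
    have "is_proper_flat (Xp nb ub) (Bp nb ub GD) (YT i j k u1 u2 u3)"
      by (rule YT_proper[OF True]) (use ijk b ub2 cos in auto)
    moreover have "x \<in> YT i j k u1 u2 u3"
      unfolding YT_mem by (rule exI[of _ "(True,False,False)"], rule exI[of _ t1]) (simp add: P b)
    moreover have "y \<in> YT i j k u1 u2 u3"
      unfolding YT_mem by (rule exI[of _ "(False,True,False)"], rule exI[of _ t2]) (simp add: P b)
    moreover have "z \<in> YT i j k u1 u2 u3"
      unfolding YT_mem by (rule exI[of _ "(False,False,True)"], rule exI[of _ t3]) (simp add: P b)
    ultimately show ?thesis using xyz by blast
  next
    case False
    have "card (spanH i j k) < nb - 1" using span_small[OF False] nb5 by simp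
    then have "is_proper_flat (Xp nb ub) (Bp nb ub GD) (YH ub (spanH i j k))" using span_flat ijk by blast
    moreover have "S \<subseteq> YH ub (spanH i j k)" using span_cover ijk xyz by simp
    ultimately show ?thesis by blast
  qed
qed

lemma rule_T:
  assumes cl: "closedB (Bp nb ub GD) Y" and x: "Gp a t u \<in> Y" and y: "Gp b s v \<in> Y" and ab: "a \<noteq> b"
    and bd: "1 \<le> a" "a < nb" "1 \<le> b" "b < nb" "t < 3" "s < 3" "u < ub" "v < ub"
  shows "third (Gp a t u) (Gp b s v) \<in> Y"
proof -
  have "tdb a t u b s v \<in> Bp nb ub GD" by (rule Bp_T) (use ab bd in simp_all)
  moreover have "Gp a t u \<in> tdb a t u b s v" "Gp b s v \<in> tdb a t u b s v" by (simp_all add: tdb_mem)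
  ultimately have "tdb a t u b s v \<subseteq> Y" using closedBD[OF cl] x y ab by simp
  then show ?thesis unfolding tdb_def by simp
qed

lemma rule_L:
  assumes cl: "closedB (Bp nb ub GD) Y" and i: "1 \<le> i" "i < nb" and c: "c \<in> GD" "Gp 0 t u \<in> c"
    and xy: "xa \<in> c" "ya \<in> c" "xa \<noteq> ya" "lift i xa \<in> Y" "lift i ya \<in> Y"
  shows "lift i ` c \<subseteq> Y"
proof -
  have "c \<noteq> Wset" using c by auto
  then have B: "lift i ` c \<in> Bp nb ub GD" using Bp_L i c by blast
  have ne: "lift i xa \<noteq> lift i ya" using inj_onD[OF lift_inj] xy Gsub[OF c(1)] by blast
  have m: "lift i xa \<in> lift i ` c" "lift i ya \<in> lift i ` c" using xy by auto
  show ?thesis by (rule closedBD[OF cl B m ne xy(4,5)])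
qed

end

definition opairs :: "'a list \<Rightarrow> ('a\<times>'a) list" where "opairs l = [(x,y). x \<leftarrow> l, y \<leftarrow> l, x \<noteq> y]"
lemma opairs_set: "(x,y) \<in> set (opairs l) \<longleftrightarrow> x \<in> set l \<and> y \<in> set l \<and> x \<noteq> y"
  by (auto simp: opairs_def)

lemma list_un:
  "distinct (concat (map opairs L)) \<Longrightarrow> l1 \<in> set L \<Longrightarrow> l2 \<in> set L \<Longrightarrow> x \<noteq> y \<Longrightarrow> x \<in> set l1 \<Longrightarrow> y \<in> set l1
   \<Longrightarrow> x \<in> set l2 \<Longrightarrow> y \<in> set l2 \<Longrightarrow> l1 = l2"
proof (induction L)
  case Nil then show ?case by simp
next
  case (Cons a L)
  have d: "distinct (opairs a)" "distinct (concat (map opairs L))"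
    "set (opairs a) \<inter> set (concat (map opairs L)) = {}" using Cons.prems(1) by auto
  show ?case
  proof (cases "l1 = a")
    case True
    show ?thesis
    proof (cases "l2 = a")
      case True then show ?thesis using \<open>l1 = a\<close> by simp
    next
      case False
      then have "l2 \<in> set L" using Cons.prems by simp
      then have "(x,y) \<in> set (concat (map opairs L))" using Cons.prems by (auto simp: opairs_set)
      moreover have "(x,y) \<in> set (opairs a)" using Cons.prems \<open>l1 = a\<close> by (simp add: opairs_set)
      ultimately show ?thesis using d(3) by blast
    qed
  next
    case False
    then have l1: "l1 \<in> set L" using Cons.prems by simp
    show ?thesis
    proof (cases "l2 = a")
      case True
      have "(x,y) \<in> set (concat (map opairs L))" using Cons.prems l1 by (auto simp: opairs_set)
      moreover have "(x,y) \<in> set (opairs a)" using Cons.prems True by (simp add: opairs_set)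
      ultimately show ?thesis using d(3) by blast
    next
      case False
      then have "l2 \<in> set L" using Cons.prems by simp
      then show ?thesis using Cons.IH[OF d(2) l1] Cons.prems by blast
    qed
  qed
qed

definition X0l :: "nat \<Rightarrow> pt list" where
  "X0l ub = map Wp [0..<5] @ concat (map (\<lambda>u. map (\<lambda>t. Gp 0 t u) [0..<3]) [0..<ub])"
lemma X0l_set: "x \<in> X0 ub \<longleftrightarrow> x \<in> set (X0l ub)"
proof (cases x)
  case (Wp j) then show ?thesis by (auto simp: X0l_def)
next
  case (Gp i t u)
  have "Gp i t u \<in> set (X0l ub) \<longleftrightarrow> (\<exists>u'\<in>{0..<ub}. Gp i t u \<in> (\<lambda>t. Gp 0 t u') ` {0..<3})"
    by (auto simp: X0l_def)
  also have "\<dots> \<longleftrightarrow> i = 0 \<and> t < 3 \<and> u < ub" by force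
  finally show ?thesis using Gp by simp
qed

lemma Xp_list: "Xp nb ub = set (map Wp [0..<5] @ concat (map (\<lambda>i. concat (map (\<lambda>t. map (\<lambda>u. Gp i t u) [0..<ub]) [0..<3])) [1..<nb]))"
proof (rule set_eqI)
  fix x show "x \<in> Xp nb ub \<longleftrightarrow> x \<in> set (map Wp [0..<5] @ concat (map (\<lambda>i. concat (map (\<lambda>t. map (\<lambda>u. Gp i t u) [0..<ub]) [0..<3])) [1..<nb]))"
    by (cases x) (auto simp: image_iff)
qed

lemma Wset_list: "Wset = set [Wp 0, Wp 1, Wp 2, Wp 3, Wp 4]"
  unfolding Wset_def by (auto simp: lessThan_atLeast0 upt_rec)

lemma xor8: "a < (8::nat) \<Longrightarrow> b < 8 \<Longrightarrow> xor a b < 8" using xor_lt_pow[of a 3 b] by simp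
lemma xor4: "a < (4::nat) \<Longrightarrow> b < 4 \<Longrightarrow> xor a b < 4" using xor_lt_pow[of a 2 b] by simp
lemma xor16: "a < (16::nat) \<Longrightarrow> b < 16 \<Longrightarrow> xor a b < 16" using xor_lt_pow[of a 4 b] by simp
lemma xor2: "a < (2::nat) \<Longrightarrow> b < 2 \<Longrightarrow> xor a b < 2" using xor_lt_pow[of a 1 b] by simp

definition L89 :: "pt list list" where "L89 = [
  [Wp 0, Wp 1, Wp 2, Wp 3, Wp 4],
  [Gp 0 0 0, Gp 0 1 0, Gp 0 2 0],
  [Gp 0 0 1, Gp 0 1 1, Gp 0 2 1],
  [Gp 0 0 2, Gp 0 1 2, Gp 0 2 2],
  [Gp 0 0 3, Gp 0 1 3, Gp 0 2 3],
  [Gp 0 2 0, Gp 0 0 2, Gp 0 0 3],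
  [Gp 0 0 0, Gp 0 1 1, Gp 0 2 3],
  [Gp 0 0 0, Gp 0 0 1, Gp 0 2 2],
  [Gp 0 2 1, Gp 0 1 2, Gp 0 1 3],
  [Gp 0 2 0, Gp 0 0 1, Gp 0 2 3],
  [Gp 0 1 0, Gp 0 1 2, Gp 0 0 3],
  [Gp 0 1 0, Gp 0 2 1, Gp 0 0 2],
  [Gp 0 1 1, Gp 0 2 2, Gp 0 1 3],
  [Wp 0, Gp 0 0 0, Gp 0 1 2],
  [Wp 0, Gp 0 0 1, Gp 0 0 2],
  [Wp 0, Gp 0 0 3, Gp 0 2 1],
  [Wp 0, Gp 0 1 0, Gp 0 1 1],
  [Wp 0, Gp 0 1 3, Gp 0 2 0],
  [Wp 0, Gp 0 2 2, Gp 0 2 3],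
  [Wp 1, Gp 0 0 0, Gp 0 0 2],
  [Wp 1, Gp 0 0 1, Gp 0 1 2],
  [Wp 1, Gp 0 0 3, Gp 0 1 1],
  [Wp 1, Gp 0 1 0, Gp 0 1 3],
  [Wp 1, Gp 0 2 0, Gp 0 2 2],
  [Wp 1, Gp 0 2 1, Gp 0 2 3],
  [Wp 2, Gp 0 0 0, Gp 0 2 1],
  [Wp 2, Gp 0 0 1, Gp 0 1 0],
  [Wp 2, Gp 0 0 2, Gp 0 1 3],
  [Wp 2, Gp 0 0 3, Gp 0 2 2],
  [Wp 2, Gp 0 1 1, Gp 0 2 0],
  [Wp 2, Gp 0 1 2, Gp 0 2 3],
  [Wp 3, Gp 0 0 0, Gp 0 0 3],
  [Wp 3, Gp 0 0 1, Gp 0 1 3],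
  [Wp 3, Gp 0 0 2, Gp 0 1 1],
  [Wp 3, Gp 0 1 0, Gp 0 2 3],
  [Wp 3, Gp 0 1 2, Gp 0 2 0],
  [Wp 3, Gp 0 2 1, Gp 0 2 2],
  [Wp 4, Gp 0 0 0, Gp 0 1 3],
  [Wp 4, Gp 0 0 1, Gp 0 0 3],
  [Wp 4, Gp 0 0 2, Gp 0 2 3],
  [Wp 4, Gp 0 1 0, Gp 0 2 2],
  [Wp 4, Gp 0 1 1, Gp 0 1 2],
  [Wp 4, Gp 0 2 0, Gp 0 2 1]]"
definition L95 :: "pt list list" where "L95 = [
  [Wp 0, Wp 1, Wp 2, Wp 3, Wp 4],
  [Wp 0, Gp 0 0 0, Gp 0 2 1],
  [Wp 0, Gp 0 1 0, Gp 0 1 1],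
  [Wp 0, Gp 0 2 0, Gp 0 0 1],
  [Wp 1, Gp 0 1 0, Gp 0 2 1],
  [Wp 1, Gp 0 2 0, Gp 0 0 0],
  [Wp 1, Gp 0 0 1, Gp 0 1 1],
  [Wp 2, Gp 0 2 0, Gp 0 2 1],
  [Wp 2, Gp 0 0 1, Gp 0 1 0],
  [Wp 2, Gp 0 1 1, Gp 0 0 0],
  [Wp 3, Gp 0 0 1, Gp 0 2 1],
  [Wp 3, Gp 0 1 1, Gp 0 2 0],
  [Wp 3, Gp 0 0 0, Gp 0 1 0],
  [Wp 4, Gp 0 1 1, Gp 0 2 1],
  [Wp 4, Gp 0 0 0, Gp 0 0 1],
  [Wp 4, Gp 0 1 0, Gp 0 2 0]]"


definition GD89 :: "pt set set" where "GD89 = set (map set L89)"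
definition GD95 :: "pt set set" where "GD95 = set (map set L95)"

lemma GD89_nth: "n < length L89 \<Longrightarrow> set (L89 ! n) \<in> GD89" unfolding GD89_def by simp
lemma GD95_nth: "n < length L95 \<Longrightarrow> set (L95 ! n) \<in> GD95" unfolding GD95_def by simp

lemma d89: "distinct (concat (map opairs L89))" by (simp add: L89_def opairs_def)
lemma d95: "distinct (concat (map opairs L95))" by (simp add: L95_def opairs_def)
lemma e89: "list_all (\<lambda>x. list_all (\<lambda>y. x = y \<or> list_ex (\<lambda>l. x \<in> set l \<and> y \<in> set l) L89) (X0l 4)) (X0l 4)"
  by (simp add: L89_def X0l_def upt_rec)
lemma e95: "list_all (\<lambda>x. list_all (\<lambda>y. x = y \<or> list_ex (\<lambda>l. x \<in> set l \<and> y \<in> set l) L95) (X0l 2)) (X0l 2)"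
  by (simp add: L95_def X0l_def upt_rec)

lemma GD_ex_gen:
  assumes "list_all (\<lambda>x. list_all (\<lambda>y. x = y \<or> list_ex (\<lambda>l. x \<in> set l \<and> y \<in> set l) L) (X0l ub)) (X0l ub)"
    and "x \<in> X0 ub" "y \<in> X0 ub" "x \<noteq> y"
  shows "\<exists>c\<in>set (map set L). x \<in> c \<and> y \<in> c"
proof -
  have "x \<in> set (X0l ub)" "y \<in> set (X0l ub)" using assms X0l_set by auto
  then obtain l where "l \<in> set L" "x \<in> set l" "y \<in> set l" using assms(1,4) by (auto simp: list_all_iff list_ex_iff)
  then show ?thesis by auto
qed

lemma GD_un_gen:
  assumes "distinct (concat (map opairs L))" "c \<in> set (map set L)" "c' \<in> set (map set L)"
    "x \<noteq> y" "x \<in> c" "y \<in> c" "x \<in> c'" "y \<in> c'"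
  shows "c = c'"
proof -
  obtain l1 l2 where "l1 \<in> set L" "l2 \<in> set L" "c = set l1" "c' = set l2" using assms(2,3) by auto
  then show ?thesis using list_un[OF assms(1)] assms by blast
qed

interpretation I89: infl 8 4 GD89
proof
  show "2 \<le> (8::nat)" "1 \<le> (4::nat)" by simp_all
  show "\<And>a b::nat. a < 8 \<Longrightarrow> b < 8 \<Longrightarrow> xor a b < 8" by (rule xor8)
  show "\<And>a b::nat. a < 4 \<Longrightarrow> b < 4 \<Longrightarrow> xor a b < 4" by (rule xor4)
  have "set (L89 ! 0) = Wset" by (simp add: L89_def Wset_list)
  then show "Wset \<in> GD89" using GD89_nth[of 0] by (simp add: L89_def)
  show "\<And>c. c \<in> GD89 \<Longrightarrow> c \<subseteq> X0 4" by (auto simp: GD89_def L89_def)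
  show "\<And>c. c \<in> GD89 \<Longrightarrow> card c = 3 \<or> card c = 5" by (auto simp: GD89_def L89_def)
  show "\<And>x y. x \<in> X0 4 \<Longrightarrow> y \<in> X0 4 \<Longrightarrow> x \<noteq> y \<Longrightarrow> \<exists>c\<in>GD89. x \<in> c \<and> y \<in> c"
    unfolding GD89_def by (rule GD_ex_gen[OF e89])
  show "\<And>c c' x y. c \<in> GD89 \<Longrightarrow> c' \<in> GD89 \<Longrightarrow> x \<noteq> y \<Longrightarrow> x \<in> c \<Longrightarrow> y \<in> c \<Longrightarrow> x \<in> c' \<Longrightarrow> y \<in> c' \<Longrightarrow> c = c'"
    unfolding GD89_def by (rule GD_un_gen[OF d89])
qed

interpretation I95: infl 16 2 GD95
proof
  show "2 \<le> (16::nat)" "1 \<le> (2::nat)" by simp_all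
  show "\<And>a b::nat. a < 16 \<Longrightarrow> b < 16 \<Longrightarrow> xor a b < 16" by (rule xor16)
  show "\<And>a b::nat. a < 2 \<Longrightarrow> b < 2 \<Longrightarrow> xor a b < 2" by (rule xor2)
  have "set (L95 ! 0) = Wset" by (simp add: L95_def Wset_list)
  then show "Wset \<in> GD95" using GD95_nth[of 0] by (simp add: L95_def)
  show "\<And>c. c \<in> GD95 \<Longrightarrow> c \<subseteq> X0 2" by (auto simp: GD95_def L95_def)
  show "\<And>c. c \<in> GD95 \<Longrightarrow> card c = 3 \<or> card c = 5" by (auto simp: GD95_def L95_def)
  show "\<And>x y. x \<in> X0 2 \<Longrightarrow> y \<in> X0 2 \<Longrightarrow> x \<noteq> y \<Longrightarrow> \<exists>c\<in>GD95. x \<in> c \<and> y \<in> c"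
    unfolding GD95_def by (rule GD_ex_gen[OF e95])
  show "\<And>c c' x y. c \<in> GD95 \<Longrightarrow> c' \<in> GD95 \<Longrightarrow> x \<noteq> y \<Longrightarrow> x \<in> c \<Longrightarrow> y \<in> c \<Longrightarrow> x \<in> c' \<Longrightarrow> y \<in> c' \<Longrightarrow> c = c'"
    unfolding GD95_def by (rule GD_un_gen[OF d95])
qed

lemma lt4: "(u::nat) < 4 \<longleftrightarrow> u = 0 \<or> u = 1 \<or> u = 2 \<or> u = 3" by auto

lemma cos89: assumes "u < 4" shows "{Gp 0 0 u, Gp 0 1 u, Gp 0 2 u} \<in> GD89"
proof -
  have "L89 ! Suc u = [Gp 0 0 u, Gp 0 1 u, Gp 0 2 u]" using assms unfolding lt4 by (auto simp: L89_def)
  moreover have "Suc u < length L89" using assms by (simp add: L89_def)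
  ultimately show ?thesis using GD89_nth[of "Suc u"] by simp
qed

lemma r8: "1 \<le> (i::nat) \<Longrightarrow> i < 8 \<Longrightarrow> i = 1 \<or> i = 2 \<or> i = 3 \<or> i = 4 \<or> i = 5 \<or> i = 6 \<or> i = 7" by presburger
lemma r16: "1 \<le> (i::nat) \<Longrightarrow> i < 16 \<Longrightarrow> i = 1 \<or> i = 2 \<or> i = 3 \<or> i = 4 \<or> i = 5 \<or> i = 6 \<or> i = 7 \<or> i = 8 \<or> i = 9 \<or> i = 10 \<or> i = 11 \<or> i = 12 \<or> i = 13 \<or> i = 14 \<or> i = 15" by presburger
lemma r5: "(i::nat) < 5 \<Longrightarrow> i = 0 \<or> i = 1 \<or> i = 2 \<or> i = 3 \<or> i = 4" by presburger
lemma r4: "(i::nat) < 4 \<Longrightarrow> i = 0 \<or> i = 1 \<or> i = 2 \<or> i = 3" by presburger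
lemma r3: "(i::nat) < 3 \<Longrightarrow> i = 0 \<or> i = 1 \<or> i = 2" by presburger
lemma r2: "(i::nat) < 2 \<Longrightarrow> i = 0 \<or> i = 1" by presburger

lemma len89: "length L89 = 43" by (simp add: L89_def)
lemma L89_6: "L89 ! 6 = [Gp 0 0 0, Gp 0 1 1, Gp 0 2 3]" by (simp add: L89_def)
lemma L89_13: "L89 ! 13 = [Wp 0, Gp 0 0 0, Gp 0 1 2]" by (simp add: L89_def)
lemma L89_19: "L89 ! 19 = [Wp 1, Gp 0 0 0, Gp 0 0 2]" by (simp add: L89_def)
lemma L89_25: "L89 ! 25 = [Wp 2, Gp 0 0 0, Gp 0 2 1]" by (simp add: L89_def)
lemma L89_31: "L89 ! 31 = [Wp 3, Gp 0 0 0, Gp 0 0 3]" by (simp add: L89_def)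
lemma L89_37: "L89 ! 37 = [Wp 4, Gp 0 0 0, Gp 0 1 3]" by (simp add: L89_def)

lemma no4_89:
  assumes cl: "closedB (Bp 8 4 GD89) Y" and s1: "Gp 3 0 1 \<in> Y" and s2: "Gp 6 2 2 \<in> Y" and s3: "Gp 6 1 0 \<in> Y" and s4: "Gp 1 2 3 \<in> Y"
  shows "Xp 8 4 \<subseteq> Y"
proof -
  have q1: "Gp 5 1 3 \<in> Y"
  proof -
    have "third (Gp 3 0 1) (Gp 6 2 2) \<in> Y" by (rule I89.rule_T[OF cl s1 s2]) simp_all
    then show ?thesis by (simp add: numeral_2_eq_2[symmetric])
  qed
  have q2: "Gp 5 2 1 \<in> Y"
  proof -
    have "third (Gp 3 0 1) (Gp 6 1 0) \<in> Y" by (rule I89.rule_T[OF cl s1 s3]) simp_all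
    then show ?thesis by (simp add: numeral_2_eq_2[symmetric])
  qed
  have q3: "Gp 2 1 2 \<in> Y"
  proof -
    have "third (Gp 3 0 1) (Gp 1 2 3) \<in> Y" by (rule I89.rule_T[OF cl s1 s4]) simp_all
    then show ?thesis by (simp add: numeral_2_eq_2[symmetric])
  qed
  have q4: "Gp 7 2 1 \<in> Y"
  proof -
    have "third (Gp 6 2 2) (Gp 1 2 3) \<in> Y" by (rule I89.rule_T[OF cl s2 s4]) simp_all
    then show ?thesis by (simp add: numeral_2_eq_2[symmetric])
  qed
  have q5: "Gp 7 0 3 \<in> Y"
  proof -
    have "third (Gp 6 1 0) (Gp 1 2 3) \<in> Y" by (rule I89.rule_T[OF cl s3 s4]) simp_all
    then show ?thesis by (simp add: numeral_2_eq_2[symmetric])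
  qed
  have q6: "Gp 4 1 0 \<in> Y"
  proof -
    have "third (Gp 3 0 1) (Gp 7 2 1) \<in> Y" by (rule I89.rule_T[OF cl s1 q4]) simp_all
    then show ?thesis by (simp add: numeral_2_eq_2[symmetric])
  qed
  have q7: "Gp 4 0 2 \<in> Y"
  proof -
    have "third (Gp 3 0 1) (Gp 7 0 3) \<in> Y" by (rule I89.rule_T[OF cl s1 q5]) simp_all
    then show ?thesis by (simp add: numeral_2_eq_2[symmetric])
  qed
  have q8: "Gp 3 2 3 \<in> Y"
  proof -
    have "third (Gp 6 2 2) (Gp 5 2 1) \<in> Y" by (rule I89.rule_T[OF cl s2 q2]) simp_all
    then show ?thesis by (simp add: numeral_2_eq_2[symmetric])
  qed
  have q9: "Gp 4 0 0 \<in> Y"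
  proof -
    have "third (Gp 6 2 2) (Gp 2 1 2) \<in> Y" by (rule I89.rule_T[OF cl s2 q3]) simp_all
    then show ?thesis by (simp add: numeral_2_eq_2[symmetric])
  qed
  have q10: "Gp 1 1 1 \<in> Y"
  proof -
    have "third (Gp 6 2 2) (Gp 7 0 3) \<in> Y" by (rule I89.rule_T[OF cl s2 q5]) simp_all
    then show ?thesis by (simp add: numeral_2_eq_2[symmetric])
  qed
  have q11: "Gp 3 1 3 \<in> Y"
  proof -
    have "third (Gp 6 1 0) (Gp 5 1 3) \<in> Y" by (rule I89.rule_T[OF cl s3 q1]) simp_all
    then show ?thesis by (simp add: numeral_2_eq_2[symmetric])
  qed
  have q12: "Gp 4 1 2 \<in> Y"
  proof -
    have "third (Gp 6 1 0) (Gp 2 1 2) \<in> Y" by (rule I89.rule_T[OF cl s3 q3]) simp_all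
    then show ?thesis by (simp add: numeral_2_eq_2[symmetric])
  qed
  have q13: "Gp 1 0 1 \<in> Y"
  proof -
    have "third (Gp 6 1 0) (Gp 7 2 1) \<in> Y" by (rule I89.rule_T[OF cl s3 q4]) simp_all
    then show ?thesis by (simp add: numeral_2_eq_2[symmetric])
  qed
  have q14: "Gp 4 2 2 \<in> Y"
  proof -
    have "third (Gp 1 2 3) (Gp 5 2 1) \<in> Y" by (rule I89.rule_T[OF cl s4 q2]) simp_all
    then show ?thesis by (simp add: numeral_2_eq_2[symmetric])
  qed
  have q15: "Gp 7 1 1 \<in> Y"
  proof -
    have "third (Gp 5 1 3) (Gp 2 1 2) \<in> Y" by (rule I89.rule_T[OF cl q1 q3]) simp_all
    then show ?thesis by (simp add: numeral_2_eq_2[symmetric])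
  qed
  have q16: "Gp 2 0 2 \<in> Y"
  proof -
    have "third (Gp 5 1 3) (Gp 7 2 1) \<in> Y" by (rule I89.rule_T[OF cl q1 q4]) simp_all
    then show ?thesis by (simp add: numeral_2_eq_2[symmetric])
  qed
  have q17: "Gp 2 2 0 \<in> Y"
  proof -
    have "third (Gp 5 1 3) (Gp 7 0 3) \<in> Y" by (rule I89.rule_T[OF cl q1 q5]) simp_all
    then show ?thesis by (simp add: numeral_2_eq_2[symmetric])
  qed
  have q18: "Gp 5 0 3 \<in> Y"
  proof -
    have "third (Gp 2 1 2) (Gp 7 2 1) \<in> Y" by (rule I89.rule_T[OF cl q3 q4]) simp_all
    then show ?thesis by (simp add: numeral_2_eq_2[symmetric])
  qed
  have q19: "Gp 7 0 1 \<in> Y"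
  proof -
    have "third (Gp 3 0 1) (Gp 4 0 0) \<in> Y" by (rule I89.rule_T[OF cl s1 q9]) simp_all
    then show ?thesis by (simp add: numeral_2_eq_2[symmetric])
  qed
  have q20: "Gp 7 2 3 \<in> Y"
  proof -
    have "third (Gp 3 0 1) (Gp 4 1 2) \<in> Y" by (rule I89.rule_T[OF cl s1 q12]) simp_all
    then show ?thesis by (simp add: numeral_2_eq_2[symmetric])
  qed
  have q21: "Gp 2 0 0 \<in> Y"
  proof -
    have "third (Gp 3 0 1) (Gp 1 0 1) \<in> Y" by (rule I89.rule_T[OF cl s1 q13]) simp_all
    then show ?thesis by (simp add: numeral_2_eq_2[symmetric])
  qed
  have q22: "Gp 7 1 3 \<in> Y"
  proof -
    have "third (Gp 3 0 1) (Gp 4 2 2) \<in> Y" by (rule I89.rule_T[OF cl s1 q14]) simp_all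
    then show ?thesis by (simp add: numeral_2_eq_2[symmetric])
  qed
  have q23: "Gp 4 2 0 \<in> Y"
  proof -
    have "third (Gp 3 0 1) (Gp 7 1 1) \<in> Y" by (rule I89.rule_T[OF cl s1 q15]) simp_all
    then show ?thesis by (simp add: numeral_2_eq_2[symmetric])
  qed
  have q24: "Gp 1 0 3 \<in> Y"
  proof -
    have "third (Gp 3 0 1) (Gp 2 0 2) \<in> Y" by (rule I89.rule_T[OF cl s1 q16]) simp_all
    then show ?thesis by (simp add: numeral_2_eq_2[symmetric])
  qed
  have q25: "Gp 6 0 2 \<in> Y"
  proof -
    have "third (Gp 3 0 1) (Gp 5 0 3) \<in> Y" by (rule I89.rule_T[OF cl s1 q18]) simp_all
    then show ?thesis by (simp add: numeral_2_eq_2[symmetric])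
  qed
  have q26: "Gp 2 1 0 \<in> Y"
  proof -
    have "third (Gp 6 2 2) (Gp 4 0 2) \<in> Y" by (rule I89.rule_T[OF cl s2 q7]) simp_all
    then show ?thesis by (simp add: numeral_2_eq_2[symmetric])
  qed
  have q27: "Gp 5 0 1 \<in> Y"
  proof -
    have "third (Gp 6 2 2) (Gp 3 1 3) \<in> Y" by (rule I89.rule_T[OF cl s2 q11]) simp_all
    then show ?thesis by (simp add: numeral_2_eq_2[symmetric])
  qed
  have q28: "Gp 3 1 1 \<in> Y"
  proof -
    have "third (Gp 6 2 2) (Gp 5 0 3) \<in> Y" by (rule I89.rule_T[OF cl s2 q18]) simp_all
    then show ?thesis by (simp add: numeral_2_eq_2[symmetric])
  qed
  have q29: "Gp 2 2 2 \<in> Y"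
  proof -
    have "third (Gp 6 1 0) (Gp 4 0 2) \<in> Y" by (rule I89.rule_T[OF cl s3 q7]) simp_all
    then show ?thesis by (simp add: numeral_2_eq_2[symmetric])
  qed
  have q30: "Gp 5 1 1 \<in> Y"
  proof -
    have "third (Gp 1 2 3) (Gp 4 0 2) \<in> Y" by (rule I89.rule_T[OF cl s4 q7]) simp_all
    then show ?thesis by (simp add: numeral_2_eq_2[symmetric])
  qed
  have q31: "Gp 1 1 3 \<in> Y"
  proof -
    have "third (Gp 5 1 3) (Gp 4 1 0) \<in> Y" by (rule I89.rule_T[OF cl q1 q6]) simp_all
    then show ?thesis by (simp add: numeral_2_eq_2[symmetric])
  qed
  have q32: "Gp 1 2 1 \<in> Y"
  proof -
    have "third (Gp 5 1 3) (Gp 4 0 2) \<in> Y" by (rule I89.rule_T[OF cl q1 q7]) simp_all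
    then show ?thesis by (simp add: numeral_2_eq_2[symmetric])
  qed
  have q33: "Gp 6 0 0 \<in> Y"
  proof -
    have "third (Gp 5 1 3) (Gp 3 2 3) \<in> Y" by (rule I89.rule_T[OF cl q1 q8]) simp_all
    then show ?thesis by (simp add: numeral_2_eq_2[symmetric])
  qed
  have q34: "Gp 6 1 2 \<in> Y"
  proof -
    have "third (Gp 2 1 2) (Gp 4 1 0) \<in> Y" by (rule I89.rule_T[OF cl q3 q6]) simp_all
    then show ?thesis by (simp add: numeral_2_eq_2[symmetric])
  qed
  have q35: "Gp 6 2 0 \<in> Y"
  proof -
    have "third (Gp 2 1 2) (Gp 4 0 2) \<in> Y" by (rule I89.rule_T[OF cl q3 q7]) simp_all
    then show ?thesis by (simp add: numeral_2_eq_2[symmetric])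
  qed
  have q36: "Gp 3 0 3 \<in> Y"
  proof -
    have "third (Gp 7 2 1) (Gp 4 1 2) \<in> Y" by (rule I89.rule_T[OF cl q4 q12]) simp_all
    then show ?thesis by (simp add: numeral_2_eq_2[symmetric])
  qed
  have q37: "Gp 3 2 1 \<in> Y"
  proof -
    have "third (Gp 7 0 3) (Gp 4 1 2) \<in> Y" by (rule I89.rule_T[OF cl q5 q12]) simp_all
    then show ?thesis by (simp add: numeral_2_eq_2[symmetric])
  qed
  have q38: "Gp 5 2 3 \<in> Y"
  proof -
    have "third (Gp 4 0 2) (Gp 1 1 1) \<in> Y" by (rule I89.rule_T[OF cl q7 q10]) simp_all
    then show ?thesis by (simp add: numeral_2_eq_2[symmetric])
  qed
  have la: "lift 1 (Gp 0 1 1) \<in> Y" using q10 by (simp only: lift.simps)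
  have lb: "lift 1 (Gp 0 2 3) \<in> Y" using s4 by (simp only: lift.simps)
  have "lift 1 ` set (L89 ! 6) \<subseteq> Y"
    by (rule I89.rule_L[OF cl _ _ GD89_nth[of 6] _ _ _ _ la lb, where t=0 and u=0]) (simp_all add: len89 L89_6)
  then have q39: "Gp 1 0 0 \<in> Y" by (simp only: L89_6 list.set image_insert image_empty lift.simps insert_subset empty_subsetI simp_thms)
  have q40: "Gp 2 0 1 \<in> Y"
  proof -
    have "third (Gp 3 0 1) (Gp 1 0 0) \<in> Y" by (rule I89.rule_T[OF cl s1 q39]) simp_all
    then show ?thesis by (simp add: numeral_2_eq_2[symmetric])
  qed
  have q41: "Gp 7 1 2 \<in> Y"
  proof -
    have "third (Gp 6 2 2) (Gp 1 0 0) \<in> Y" by (rule I89.rule_T[OF cl s2 q39]) simp_all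
    then show ?thesis by (simp add: numeral_2_eq_2[symmetric])
  qed
  have q42: "Gp 7 2 0 \<in> Y"
  proof -
    have "third (Gp 6 1 0) (Gp 1 0 0) \<in> Y" by (rule I89.rule_T[OF cl s3 q39]) simp_all
    then show ?thesis by (simp add: numeral_2_eq_2[symmetric])
  qed
  have q43: "Gp 4 2 3 \<in> Y"
  proof -
    have "third (Gp 5 1 3) (Gp 1 0 0) \<in> Y" by (rule I89.rule_T[OF cl q1 q39]) simp_all
    then show ?thesis by (simp add: numeral_2_eq_2[symmetric])
  qed
  have q44: "Gp 4 1 1 \<in> Y"
  proof -
    have "third (Gp 5 2 1) (Gp 1 0 0) \<in> Y" by (rule I89.rule_T[OF cl q2 q39]) simp_all
    then show ?thesis by (simp add: numeral_2_eq_2[symmetric])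
  qed
  have q45: "Gp 3 2 2 \<in> Y"
  proof -
    have "third (Gp 2 1 2) (Gp 1 0 0) \<in> Y" by (rule I89.rule_T[OF cl q3 q39]) simp_all
    then show ?thesis by (simp add: numeral_2_eq_2[symmetric])
  qed
  have q46: "Gp 6 1 1 \<in> Y"
  proof -
    have "third (Gp 7 2 1) (Gp 1 0 0) \<in> Y" by (rule I89.rule_T[OF cl q4 q39]) simp_all
    then show ?thesis by (simp add: numeral_2_eq_2[symmetric])
  qed
  have q47: "Gp 6 0 3 \<in> Y"
  proof -
    have "third (Gp 7 0 3) (Gp 1 0 0) \<in> Y" by (rule I89.rule_T[OF cl q5 q39]) simp_all
    then show ?thesis by (simp add: numeral_2_eq_2[symmetric])
  qed
  have q48: "Gp 5 2 0 \<in> Y"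
  proof -
    have "third (Gp 4 1 0) (Gp 1 0 0) \<in> Y" by (rule I89.rule_T[OF cl q6 q39]) simp_all
    then show ?thesis by (simp add: numeral_2_eq_2[symmetric])
  qed
  have q49: "Gp 5 0 2 \<in> Y"
  proof -
    have "third (Gp 4 0 2) (Gp 1 0 0) \<in> Y" by (rule I89.rule_T[OF cl q7 q39]) simp_all
    then show ?thesis by (simp add: numeral_2_eq_2[symmetric])
  qed
  have q50: "Gp 2 1 3 \<in> Y"
  proof -
    have "third (Gp 3 2 3) (Gp 1 0 0) \<in> Y" by (rule I89.rule_T[OF cl q8 q39]) simp_all
    then show ?thesis by (simp add: numeral_2_eq_2[symmetric])
  qed
  have q51: "Gp 5 0 0 \<in> Y"
  proof -
    have "third (Gp 4 0 0) (Gp 1 0 0) \<in> Y" by (rule I89.rule_T[OF cl q9 q39]) simp_all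
    then show ?thesis by (simp add: numeral_2_eq_2[symmetric])
  qed
  have q52: "Gp 2 2 3 \<in> Y"
  proof -
    have "third (Gp 3 1 3) (Gp 1 0 0) \<in> Y" by (rule I89.rule_T[OF cl q11 q39]) simp_all
    then show ?thesis by (simp add: numeral_2_eq_2[symmetric])
  qed
  have q53: "Gp 5 2 2 \<in> Y"
  proof -
    have "third (Gp 4 1 2) (Gp 1 0 0) \<in> Y" by (rule I89.rule_T[OF cl q12 q39]) simp_all
    then show ?thesis by (simp add: numeral_2_eq_2[symmetric])
  qed
  have q54: "Gp 5 1 2 \<in> Y"
  proof -
    have "third (Gp 4 2 2) (Gp 1 0 0) \<in> Y" by (rule I89.rule_T[OF cl q14 q39]) simp_all
    then show ?thesis by (simp add: numeral_2_eq_2[symmetric])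
  qed
  have q55: "Gp 6 2 1 \<in> Y"
  proof -
    have "third (Gp 7 1 1) (Gp 1 0 0) \<in> Y" by (rule I89.rule_T[OF cl q15 q39]) simp_all
    then show ?thesis by (simp add: numeral_2_eq_2[symmetric])
  qed
  have q56: "Gp 3 0 2 \<in> Y"
  proof -
    have "third (Gp 2 0 2) (Gp 1 0 0) \<in> Y" by (rule I89.rule_T[OF cl q16 q39]) simp_all
    then show ?thesis by (simp add: numeral_2_eq_2[symmetric])
  qed
  have q57: "Gp 3 1 0 \<in> Y"
  proof -
    have "third (Gp 2 2 0) (Gp 1 0 0) \<in> Y" by (rule I89.rule_T[OF cl q17 q39]) simp_all
    then show ?thesis by (simp add: numeral_2_eq_2[symmetric])
  qed
  have q58: "Gp 4 0 3 \<in> Y"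
  proof -
    have "third (Gp 5 0 3) (Gp 1 0 0) \<in> Y" by (rule I89.rule_T[OF cl q18 q39]) simp_all
    then show ?thesis by (simp add: numeral_2_eq_2[symmetric])
  qed
  have q59: "Gp 6 0 1 \<in> Y"
  proof -
    have "third (Gp 7 0 1) (Gp 1 0 0) \<in> Y" by (rule I89.rule_T[OF cl q19 q39]) simp_all
    then show ?thesis by (simp add: numeral_2_eq_2[symmetric])
  qed
  have q60: "Gp 6 1 3 \<in> Y"
  proof -
    have "third (Gp 7 2 3) (Gp 1 0 0) \<in> Y" by (rule I89.rule_T[OF cl q20 q39]) simp_all
    then show ?thesis by (simp add: numeral_2_eq_2[symmetric])
  qed
  have q61: "Gp 3 0 0 \<in> Y"
  proof -
    have "third (Gp 2 0 0) (Gp 1 0 0) \<in> Y" by (rule I89.rule_T[OF cl q21 q39]) simp_all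
    then show ?thesis by (simp add: numeral_2_eq_2[symmetric])
  qed
  have q62: "Gp 6 2 3 \<in> Y"
  proof -
    have "third (Gp 7 1 3) (Gp 1 0 0) \<in> Y" by (rule I89.rule_T[OF cl q22 q39]) simp_all
    then show ?thesis by (simp add: numeral_2_eq_2[symmetric])
  qed
  have q63: "Gp 5 1 0 \<in> Y"
  proof -
    have "third (Gp 4 2 0) (Gp 1 0 0) \<in> Y" by (rule I89.rule_T[OF cl q23 q39]) simp_all
    then show ?thesis by (simp add: numeral_2_eq_2[symmetric])
  qed
  have q64: "Gp 7 0 2 \<in> Y"
  proof -
    have "third (Gp 6 0 2) (Gp 1 0 0) \<in> Y" by (rule I89.rule_T[OF cl q25 q39]) simp_all
    then show ?thesis by (simp add: numeral_2_eq_2[symmetric])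
  qed
  have q65: "Gp 3 2 0 \<in> Y"
  proof -
    have "third (Gp 2 1 0) (Gp 1 0 0) \<in> Y" by (rule I89.rule_T[OF cl q26 q39]) simp_all
    then show ?thesis by (simp add: numeral_2_eq_2[symmetric])
  qed
  have q66: "Gp 4 0 1 \<in> Y"
  proof -
    have "third (Gp 5 0 1) (Gp 1 0 0) \<in> Y" by (rule I89.rule_T[OF cl q27 q39]) simp_all
    then show ?thesis by (simp add: numeral_2_eq_2[symmetric])
  qed
  have q67: "Gp 2 2 1 \<in> Y"
  proof -
    have "third (Gp 3 1 1) (Gp 1 0 0) \<in> Y" by (rule I89.rule_T[OF cl q28 q39]) simp_all
    then show ?thesis by (simp add: numeral_2_eq_2[symmetric])
  qed
  have q68: "Gp 3 1 2 \<in> Y"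
  proof -
    have "third (Gp 2 2 2) (Gp 1 0 0) \<in> Y" by (rule I89.rule_T[OF cl q29 q39]) simp_all
    then show ?thesis by (simp add: numeral_2_eq_2[symmetric])
  qed
  have q69: "Gp 4 2 1 \<in> Y"
  proof -
    have "third (Gp 5 1 1) (Gp 1 0 0) \<in> Y" by (rule I89.rule_T[OF cl q30 q39]) simp_all
    then show ?thesis by (simp add: numeral_2_eq_2[symmetric])
  qed
  have q70: "Gp 7 0 0 \<in> Y"
  proof -
    have "third (Gp 6 0 0) (Gp 1 0 0) \<in> Y" by (rule I89.rule_T[OF cl q33 q39]) simp_all
    then show ?thesis by (simp add: numeral_2_eq_2[symmetric])
  qed
  have q71: "Gp 7 2 2 \<in> Y"
  proof -
    have "third (Gp 6 1 2) (Gp 1 0 0) \<in> Y" by (rule I89.rule_T[OF cl q34 q39]) simp_all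
    then show ?thesis by (simp add: numeral_2_eq_2[symmetric])
  qed
  have q72: "Gp 7 1 0 \<in> Y"
  proof -
    have "third (Gp 6 2 0) (Gp 1 0 0) \<in> Y" by (rule I89.rule_T[OF cl q35 q39]) simp_all
    then show ?thesis by (simp add: numeral_2_eq_2[symmetric])
  qed
  have q73: "Gp 2 0 3 \<in> Y"
  proof -
    have "third (Gp 3 0 3) (Gp 1 0 0) \<in> Y" by (rule I89.rule_T[OF cl q36 q39]) simp_all
    then show ?thesis by (simp add: numeral_2_eq_2[symmetric])
  qed
  have q74: "Gp 2 1 1 \<in> Y"
  proof -
    have "third (Gp 3 2 1) (Gp 1 0 0) \<in> Y" by (rule I89.rule_T[OF cl q37 q39]) simp_all
    then show ?thesis by (simp add: numeral_2_eq_2[symmetric])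
  qed
  have q75: "Gp 4 1 3 \<in> Y"
  proof -
    have "third (Gp 5 2 3) (Gp 1 0 0) \<in> Y" by (rule I89.rule_T[OF cl q38 q39]) simp_all
    then show ?thesis by (simp add: numeral_2_eq_2[symmetric])
  qed
  have q76: "Gp 1 2 2 \<in> Y"
  proof -
    have "third (Gp 3 0 1) (Gp 2 1 3) \<in> Y" by (rule I89.rule_T[OF cl s1 q50]) simp_all
    then show ?thesis by (simp add: numeral_2_eq_2[symmetric])
  qed
  have q77: "Gp 1 1 2 \<in> Y"
  proof -
    have "third (Gp 3 0 1) (Gp 2 2 3) \<in> Y" by (rule I89.rule_T[OF cl s1 q52]) simp_all
    then show ?thesis by (simp add: numeral_2_eq_2[symmetric])
  qed
  have q78: "Gp 1 1 0 \<in> Y"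
  proof -
    have "third (Gp 3 0 1) (Gp 2 2 1) \<in> Y" by (rule I89.rule_T[OF cl s1 q67]) simp_all
    then show ?thesis by (simp add: numeral_2_eq_2[symmetric])
  qed
  have q79: "Gp 1 0 2 \<in> Y"
  proof -
    have "third (Gp 3 0 1) (Gp 2 0 3) \<in> Y" by (rule I89.rule_T[OF cl s1 q73]) simp_all
    then show ?thesis by (simp add: numeral_2_eq_2[symmetric])
  qed
  have q80: "Gp 1 2 0 \<in> Y"
  proof -
    have "third (Gp 3 0 1) (Gp 2 1 1) \<in> Y" by (rule I89.rule_T[OF cl s1 q74]) simp_all
    then show ?thesis by (simp add: numeral_2_eq_2[symmetric])
  qed
  have la: "lift 1 (Gp 0 0 0) \<in> Y" using q39 by (simp only: lift.simps)
  have lb: "lift 1 (Gp 0 1 2) \<in> Y" using q77 by (simp only: lift.simps)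
  have "lift 1 ` set (L89 ! 13) \<subseteq> Y"
    by (rule I89.rule_L[OF cl _ _ GD89_nth[of 13] _ _ _ _ la lb, where t=0 and u=0]) (simp_all add: len89 L89_13)
  then have q81: "Wp 0 \<in> Y" by (simp only: L89_13 list.set image_insert image_empty lift.simps insert_subset empty_subsetI simp_thms)
  have la: "lift 1 (Gp 0 0 0) \<in> Y" using q39 by (simp only: lift.simps)
  have lb: "lift 1 (Gp 0 0 2) \<in> Y" using q79 by (simp only: lift.simps)
  have "lift 1 ` set (L89 ! 19) \<subseteq> Y"
    by (rule I89.rule_L[OF cl _ _ GD89_nth[of 19] _ _ _ _ la lb, where t=0 and u=0]) (simp_all add: len89 L89_19)
  then have q82: "Wp 1 \<in> Y" by (simp only: L89_19 list.set image_insert image_empty lift.simps insert_subset empty_subsetI simp_thms)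
  have la: "lift 1 (Gp 0 0 0) \<in> Y" using q39 by (simp only: lift.simps)
  have lb: "lift 1 (Gp 0 2 1) \<in> Y" using q32 by (simp only: lift.simps)
  have "lift 1 ` set (L89 ! 25) \<subseteq> Y"
    by (rule I89.rule_L[OF cl _ _ GD89_nth[of 25] _ _ _ _ la lb, where t=0 and u=0]) (simp_all add: len89 L89_25)
  then have q83: "Wp 2 \<in> Y" by (simp only: L89_25 list.set image_insert image_empty lift.simps insert_subset empty_subsetI simp_thms)
  have la: "lift 1 (Gp 0 0 0) \<in> Y" using q39 by (simp only: lift.simps)
  have lb: "lift 1 (Gp 0 0 3) \<in> Y" using q24 by (simp only: lift.simps)
  have "lift 1 ` set (L89 ! 31) \<subseteq> Y"
    by (rule I89.rule_L[OF cl _ _ GD89_nth[of 31] _ _ _ _ la lb, where t=0 and u=0]) (simp_all add: len89 L89_31)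
  then have q84: "Wp 3 \<in> Y" by (simp only: L89_31 list.set image_insert image_empty lift.simps insert_subset empty_subsetI simp_thms)
  have la: "lift 1 (Gp 0 0 0) \<in> Y" using q39 by (simp only: lift.simps)
  have lb: "lift 1 (Gp 0 1 3) \<in> Y" using q31 by (simp only: lift.simps)
  have "lift 1 ` set (L89 ! 37) \<subseteq> Y"
    by (rule I89.rule_L[OF cl _ _ GD89_nth[of 37] _ _ _ _ la lb, where t=0 and u=0]) (simp_all add: len89 L89_37)
  then have q85: "Wp 4 \<in> Y" by (simp only: L89_37 list.set image_insert image_empty lift.simps insert_subset empty_subsetI simp_thms)
  show ?thesis
  proof
    fix p assume pX: "p \<in> Xp 8 4"
    show "p \<in> Y"
    proof (cases p)
      case (Wp j)
      then have "j < 5" using pX by simp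
      then have "j = 0 \<or> j = 1 \<or> j = 2 \<or> j = 3 \<or> j = 4" by (rule r5)
      then show ?thesis using Wp q1 q10 q11 q12 q13 q14 q15 q16 q17 q18 q19 q2 q20 q21 q22 q23 q24 q25 q26 q27 q28 q29 q3 q30 q31 q32 q33 q34 q35 q36 q37 q38 q39 q4 q40 q41 q42 q43 q44 q45 q46 q47 q48 q49 q5 q50 q51 q52 q53 q54 q55 q56 q57 q58 q59 q6 q60 q61 q62 q63 q64 q65 q66 q67 q68 q69 q7 q70 q71 q72 q73 q74 q75 q76 q77 q78 q79 q8 q80 q81 q82 q83 q84 q85 q9 s1 s2 s3 s4 by (elim disjE) simp_all
    next
      case (Gp i t u)
      then have b: "1 \<le> i" "i < 8" "t < 3" "u < 4" using pX by simp_all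
      from r8[OF b(1,2)] r3[OF b(3)] r4[OF b(4)] show ?thesis using Gp q1 q10 q11 q12 q13 q14 q15 q16 q17 q18 q19 q2 q20 q21 q22 q23 q24 q25 q26 q27 q28 q29 q3 q30 q31 q32 q33 q34 q35 q36 q37 q38 q39 q4 q40 q41 q42 q43 q44 q45 q46 q47 q48 q49 q5 q50 q51 q52 q53 q54 q55 q56 q57 q58 q59 q6 q60 q61 q62 q63 q64 q65 q66 q67 q68 q69 q7 q70 q71 q72 q73 q74 q75 q76 q77 q78 q79 q8 q80 q81 q82 q83 q84 q85 q9 s1 s2 s3 s4 by (elim disjE) simp_all
    qed
  qed
qed


lemma len95: "length L95 = 16" by (simp add: L95_def)
lemma L95_1: "L95 ! 1 = [Wp 0, Gp 0 0 0, Gp 0 2 1]" "L95 ! Suc 0 = [Wp 0, Gp 0 0 0, Gp 0 2 1]" by (simp_all add: L95_def)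
lemma L95_4: "L95 ! 4 = [Wp 1, Gp 0 1 0, Gp 0 2 1]" by (simp add: L95_def)
lemma L95_6: "L95 ! 6 = [Wp 1, Gp 0 0 1, Gp 0 1 1]" by (simp add: L95_def)
lemma L95_7: "L95 ! 7 = [Wp 2, Gp 0 2 0, Gp 0 2 1]" by (simp add: L95_def)
lemma L95_10: "L95 ! 10 = [Wp 3, Gp 0 0 1, Gp 0 2 1]" by (simp add: L95_def)
lemma L95_13: "L95 ! 13 = [Wp 4, Gp 0 1 1, Gp 0 2 1]" by (simp add: L95_def)

lemma no4_95:
  assumes cl: "closedB (Bp 16 2 GD95) Y" and s1: "Gp 10 0 1 \<in> Y" and s2: "Gp 5 1 0 \<in> Y" and s3: "Gp 8 0 1 \<in> Y" and s4: "Gp 11 2 0 \<in> Y"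
  shows "Xp 16 2 \<subseteq> Y"
proof -
  have q1: "Gp 15 2 1 \<in> Y"
  proof -
    have "third (Gp 10 0 1) (Gp 5 1 0) \<in> Y" by (rule I95.rule_T[OF cl s1 s2]) simp_all
    then show ?thesis by (simp add: numeral_2_eq_2[symmetric])
  qed
  have q2: "Gp 2 0 0 \<in> Y"
  proof -
    have "third (Gp 10 0 1) (Gp 8 0 1) \<in> Y" by (rule I95.rule_T[OF cl s1 s3]) simp_all
    then show ?thesis by (simp add: numeral_2_eq_2[symmetric])
  qed
  have q3: "Gp 1 1 1 \<in> Y"
  proof -
    have "third (Gp 10 0 1) (Gp 11 2 0) \<in> Y" by (rule I95.rule_T[OF cl s1 s4]) simp_all
    then show ?thesis by (simp add: numeral_2_eq_2[symmetric])
  qed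
  have q4: "Gp 13 2 1 \<in> Y"
  proof -
    have "third (Gp 5 1 0) (Gp 8 0 1) \<in> Y" by (rule I95.rule_T[OF cl s2 s3]) simp_all
    then show ?thesis by (simp add: numeral_2_eq_2[symmetric])
  qed
  have q5: "Gp 14 0 0 \<in> Y"
  proof -
    have "third (Gp 5 1 0) (Gp 11 2 0) \<in> Y" by (rule I95.rule_T[OF cl s2 s4]) simp_all
    then show ?thesis by (simp add: numeral_2_eq_2[symmetric])
  qed
  have q6: "Gp 3 1 1 \<in> Y"
  proof -
    have "third (Gp 8 0 1) (Gp 11 2 0) \<in> Y" by (rule I95.rule_T[OF cl s3 s4]) simp_all
    then show ?thesis by (simp add: numeral_2_eq_2[symmetric])
  qed
  have q7: "Gp 7 1 0 \<in> Y"
  proof -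
    have "third (Gp 10 0 1) (Gp 13 2 1) \<in> Y" by (rule I95.rule_T[OF cl s1 q4]) simp_all
    then show ?thesis by (simp add: numeral_2_eq_2[symmetric])
  qed
  have q8: "Gp 4 0 1 \<in> Y"
  proof -
    have "third (Gp 10 0 1) (Gp 14 0 0) \<in> Y" by (rule I95.rule_T[OF cl s1 q5]) simp_all
    then show ?thesis by (simp add: numeral_2_eq_2[symmetric])
  qed
  have q9: "Gp 9 2 0 \<in> Y"
  proof -
    have "third (Gp 10 0 1) (Gp 3 1 1) \<in> Y" by (rule I95.rule_T[OF cl s1 q6]) simp_all
    then show ?thesis by (simp add: numeral_2_eq_2[symmetric])
  qed
  have q10: "Gp 7 2 0 \<in> Y"
  proof -
    have "third (Gp 5 1 0) (Gp 2 0 0) \<in> Y" by (rule I95.rule_T[OF cl s2 q2]) simp_all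
    then show ?thesis by (simp add: numeral_2_eq_2[symmetric])
  qed
  have q11: "Gp 4 1 1 \<in> Y"
  proof -
    have "third (Gp 5 1 0) (Gp 1 1 1) \<in> Y" by (rule I95.rule_T[OF cl s2 q3]) simp_all
    then show ?thesis by (simp add: numeral_2_eq_2[symmetric])
  qed
  have q12: "Gp 6 1 1 \<in> Y"
  proof -
    have "third (Gp 5 1 0) (Gp 3 1 1) \<in> Y" by (rule I95.rule_T[OF cl s2 q6]) simp_all
    then show ?thesis by (simp add: numeral_2_eq_2[symmetric])
  qed
  have q13: "Gp 6 0 1 \<in> Y"
  proof -
    have "third (Gp 8 0 1) (Gp 14 0 0) \<in> Y" by (rule I95.rule_T[OF cl s3 q5]) simp_all
    then show ?thesis by (simp add: numeral_2_eq_2[symmetric])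
  qed
  have q14: "Gp 4 2 1 \<in> Y"
  proof -
    have "third (Gp 11 2 0) (Gp 15 2 1) \<in> Y" by (rule I95.rule_T[OF cl s4 q1]) simp_all
    then show ?thesis by (simp add: numeral_2_eq_2[symmetric])
  qed
  have q15: "Gp 9 1 0 \<in> Y"
  proof -
    have "third (Gp 11 2 0) (Gp 2 0 0) \<in> Y" by (rule I95.rule_T[OF cl s4 q2]) simp_all
    then show ?thesis by (simp add: numeral_2_eq_2[symmetric])
  qed
  have q16: "Gp 6 2 1 \<in> Y"
  proof -
    have "third (Gp 11 2 0) (Gp 13 2 1) \<in> Y" by (rule I95.rule_T[OF cl s4 q4]) simp_all
    then show ?thesis by (simp add: numeral_2_eq_2[symmetric])
  qed
  have q17: "Gp 13 1 1 \<in> Y"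
  proof -
    have "third (Gp 15 2 1) (Gp 2 0 0) \<in> Y" by (rule I95.rule_T[OF cl q1 q2]) simp_all
    then show ?thesis by (simp add: numeral_2_eq_2[symmetric])
  qed
  have q18: "Gp 2 2 0 \<in> Y"
  proof -
    have "third (Gp 15 2 1) (Gp 13 2 1) \<in> Y" by (rule I95.rule_T[OF cl q1 q4]) simp_all
    then show ?thesis by (simp add: numeral_2_eq_2[symmetric])
  qed
  have q19: "Gp 12 0 0 \<in> Y"
  proof -
    have "third (Gp 15 2 1) (Gp 3 1 1) \<in> Y" by (rule I95.rule_T[OF cl q1 q6]) simp_all
    then show ?thesis by (simp add: numeral_2_eq_2[symmetric])
  qed
  have q20: "Gp 3 2 1 \<in> Y"
  proof -
    have "third (Gp 2 0 0) (Gp 1 1 1) \<in> Y" by (rule I95.rule_T[OF cl q2 q3]) simp_all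
    then show ?thesis by (simp add: numeral_2_eq_2[symmetric])
  qed
  have q21: "Gp 15 1 1 \<in> Y"
  proof -
    have "third (Gp 2 0 0) (Gp 13 2 1) \<in> Y" by (rule I95.rule_T[OF cl q2 q4]) simp_all
    then show ?thesis by (simp add: numeral_2_eq_2[symmetric])
  qed
  have q22: "Gp 1 2 1 \<in> Y"
  proof -
    have "third (Gp 2 0 0) (Gp 3 1 1) \<in> Y" by (rule I95.rule_T[OF cl q2 q6]) simp_all
    then show ?thesis by (simp add: numeral_2_eq_2[symmetric])
  qed
  have q23: "Gp 2 1 0 \<in> Y"
  proof -
    have "third (Gp 1 1 1) (Gp 3 1 1) \<in> Y" by (rule I95.rule_T[OF cl q3 q6]) simp_all
    then show ?thesis by (simp add: numeral_2_eq_2[symmetric])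
  qed
  have q24: "Gp 14 2 0 \<in> Y"
  proof -
    have "third (Gp 10 0 1) (Gp 4 1 1) \<in> Y" by (rule I95.rule_T[OF cl s1 q11]) simp_all
    then show ?thesis by (simp add: numeral_2_eq_2[symmetric])
  qed
  have q25: "Gp 12 2 0 \<in> Y"
  proof -
    have "third (Gp 10 0 1) (Gp 6 1 1) \<in> Y" by (rule I95.rule_T[OF cl s1 q12]) simp_all
    then show ?thesis by (simp add: numeral_2_eq_2[symmetric])
  qed
  have q26: "Gp 14 1 0 \<in> Y"
  proof -
    have "third (Gp 10 0 1) (Gp 4 2 1) \<in> Y" by (rule I95.rule_T[OF cl s1 q14]) simp_all
    then show ?thesis by (simp add: numeral_2_eq_2[symmetric])
  qed
  have q27: "Gp 12 1 0 \<in> Y"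
  proof -
    have "third (Gp 10 0 1) (Gp 6 2 1) \<in> Y" by (rule I95.rule_T[OF cl s1 q16]) simp_all
    then show ?thesis by (simp add: numeral_2_eq_2[symmetric])
  qed
  have q28: "Gp 8 1 1 \<in> Y"
  proof -
    have "third (Gp 10 0 1) (Gp 2 2 0) \<in> Y" by (rule I95.rule_T[OF cl s1 q18]) simp_all
    then show ?thesis by (simp add: numeral_2_eq_2[symmetric])
  qed
  have q29: "Gp 5 2 0 \<in> Y"
  proof -
    have "third (Gp 10 0 1) (Gp 15 1 1) \<in> Y" by (rule I95.rule_T[OF cl s1 q21]) simp_all
    then show ?thesis by (simp add: numeral_2_eq_2[symmetric])
  qed
  have q30: "Gp 11 1 0 \<in> Y"
  proof -
    have "third (Gp 10 0 1) (Gp 1 2 1) \<in> Y" by (rule I95.rule_T[OF cl s1 q22]) simp_all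
    then show ?thesis by (simp add: numeral_2_eq_2[symmetric])
  qed
  have q31: "Gp 8 2 1 \<in> Y"
  proof -
    have "third (Gp 10 0 1) (Gp 2 1 0) \<in> Y" by (rule I95.rule_T[OF cl s1 q23]) simp_all
    then show ?thesis by (simp add: numeral_2_eq_2[symmetric])
  qed
  have q32: "Gp 1 0 1 \<in> Y"
  proof -
    have "third (Gp 5 1 0) (Gp 4 2 1) \<in> Y" by (rule I95.rule_T[OF cl s2 q14]) simp_all
    then show ?thesis by (simp add: numeral_2_eq_2[symmetric])
  qed
  have q33: "Gp 3 0 1 \<in> Y"
  proof -
    have "third (Gp 5 1 0) (Gp 6 2 1) \<in> Y" by (rule I95.rule_T[OF cl s2 q16]) simp_all
    then show ?thesis by (simp add: numeral_2_eq_2[symmetric])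
  qed
  have q34: "Gp 7 0 0 \<in> Y"
  proof -
    have "third (Gp 5 1 0) (Gp 2 2 0) \<in> Y" by (rule I95.rule_T[OF cl s2 q18]) simp_all
    then show ?thesis by (simp add: numeral_2_eq_2[symmetric])
  qed
  have q35: "Gp 10 1 1 \<in> Y"
  proof -
    have "third (Gp 5 1 0) (Gp 15 1 1) \<in> Y" by (rule I95.rule_T[OF cl s2 q21]) simp_all
    then show ?thesis by (simp add: numeral_2_eq_2[symmetric])
  qed
  have q36: "Gp 10 2 1 \<in> Y"
  proof -
    have "third (Gp 8 0 1) (Gp 2 1 0) \<in> Y" by (rule I95.rule_T[OF cl s3 q23]) simp_all
    then show ?thesis by (simp add: numeral_2_eq_2[symmetric])
  qed
  have q37: "Gp 15 0 1 \<in> Y"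
  proof -
    have "third (Gp 11 2 0) (Gp 4 1 1) \<in> Y" by (rule I95.rule_T[OF cl s4 q11]) simp_all
    then show ?thesis by (simp add: numeral_2_eq_2[symmetric])
  qed
  have q38: "Gp 13 0 1 \<in> Y"
  proof -
    have "third (Gp 11 2 0) (Gp 6 1 1) \<in> Y" by (rule I95.rule_T[OF cl s4 q12]) simp_all
    then show ?thesis by (simp add: numeral_2_eq_2[symmetric])
  qed
  have q39: "Gp 9 0 0 \<in> Y"
  proof -
    have "third (Gp 11 2 0) (Gp 2 1 0) \<in> Y" by (rule I95.rule_T[OF cl s4 q23]) simp_all
    then show ?thesis by (simp add: numeral_2_eq_2[symmetric])
  qed
  have q40: "Gp 11 0 0 \<in> Y"
  proof -
    have "third (Gp 15 2 1) (Gp 4 1 1) \<in> Y" by (rule I95.rule_T[OF cl q1 q11]) simp_all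
    then show ?thesis by (simp add: numeral_2_eq_2[symmetric])
  qed
  have q41: "Gp 5 0 0 \<in> Y"
  proof -
    have "third (Gp 1 1 1) (Gp 4 2 1) \<in> Y" by (rule I95.rule_T[OF cl q3 q14]) simp_all
    then show ?thesis by (simp add: numeral_2_eq_2[symmetric])
  qed
  have la: "lift 1 (Gp 0 0 1) \<in> Y" using q32 by (simp only: lift.simps)
  have lb: "lift 1 (Gp 0 1 1) \<in> Y" using q3 by (simp only: lift.simps)
  have "lift 1 ` set (L95 ! 6) \<subseteq> Y"
    by (rule I95.rule_L[OF cl _ _ GD95_nth[of 6] _ _ _ _ la lb, where t=0 and u=1]) (simp_all add: len95 L95_6)
  then have q42: "Wp 1 \<in> Y" by (simp only: L95_6 list.set image_insert image_empty lift.simps insert_subset empty_subsetI simp_thms)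
  have la: "lift 1 (Wp 1) \<in> Y" using q42 by (simp only: lift.simps)
  have lb: "lift 1 (Gp 0 2 1) \<in> Y" using q22 by (simp only: lift.simps)
  have "lift 1 ` set (L95 ! 4) \<subseteq> Y"
    by (rule I95.rule_L[OF cl _ _ GD95_nth[of 4] _ _ _ _ la lb, where t=1 and u=0]) (simp_all add: len95 L95_4)
  then have q43: "Gp 1 1 0 \<in> Y" by (simp only: L95_4 list.set image_insert image_empty lift.simps insert_subset empty_subsetI simp_thms)
  have q44: "Gp 11 2 1 \<in> Y"
  proof -
    have "third (Gp 10 0 1) (Gp 1 1 0) \<in> Y" by (rule I95.rule_T[OF cl s1 q43]) simp_all
    then show ?thesis by (simp add: numeral_2_eq_2[symmetric])
  qed
  have q45: "Gp 4 1 0 \<in> Y"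
  proof -
    have "third (Gp 5 1 0) (Gp 1 1 0) \<in> Y" by (rule I95.rule_T[OF cl s2 q43]) simp_all
    then show ?thesis by (simp add: numeral_2_eq_2[symmetric])
  qed
  have q46: "Gp 9 2 1 \<in> Y"
  proof -
    have "third (Gp 8 0 1) (Gp 1 1 0) \<in> Y" by (rule I95.rule_T[OF cl s3 q43]) simp_all
    then show ?thesis by (simp add: numeral_2_eq_2[symmetric])
  qed
  have q47: "Gp 10 0 0 \<in> Y"
  proof -
    have "third (Gp 11 2 0) (Gp 1 1 0) \<in> Y" by (rule I95.rule_T[OF cl s4 q43]) simp_all
    then show ?thesis by (simp add: numeral_2_eq_2[symmetric])
  qed
  have q48: "Gp 14 0 1 \<in> Y"
  proof -
    have "third (Gp 15 2 1) (Gp 1 1 0) \<in> Y" by (rule I95.rule_T[OF cl q1 q43]) simp_all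
    then show ?thesis by (simp add: numeral_2_eq_2[symmetric])
  qed
  have q49: "Gp 3 2 0 \<in> Y"
  proof -
    have "third (Gp 2 0 0) (Gp 1 1 0) \<in> Y" by (rule I95.rule_T[OF cl q2 q43]) simp_all
    then show ?thesis by (simp add: numeral_2_eq_2[symmetric])
  qed
  have q50: "Gp 12 0 1 \<in> Y"
  proof -
    have "third (Gp 13 2 1) (Gp 1 1 0) \<in> Y" by (rule I95.rule_T[OF cl q4 q43]) simp_all
    then show ?thesis by (simp add: numeral_2_eq_2[symmetric])
  qed
  have q51: "Gp 15 2 0 \<in> Y"
  proof -
    have "third (Gp 14 0 0) (Gp 1 1 0) \<in> Y" by (rule I95.rule_T[OF cl q5 q43]) simp_all
    then show ?thesis by (simp add: numeral_2_eq_2[symmetric])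
  qed
  have q52: "Gp 2 1 1 \<in> Y"
  proof -
    have "third (Gp 3 1 1) (Gp 1 1 0) \<in> Y" by (rule I95.rule_T[OF cl q6 q43]) simp_all
    then show ?thesis by (simp add: numeral_2_eq_2[symmetric])
  qed
  have q53: "Gp 6 1 0 \<in> Y"
  proof -
    have "third (Gp 7 1 0) (Gp 1 1 0) \<in> Y" by (rule I95.rule_T[OF cl q7 q43]) simp_all
    then show ?thesis by (simp add: numeral_2_eq_2[symmetric])
  qed
  have q54: "Gp 5 2 1 \<in> Y"
  proof -
    have "third (Gp 4 0 1) (Gp 1 1 0) \<in> Y" by (rule I95.rule_T[OF cl q8 q43]) simp_all
    then show ?thesis by (simp add: numeral_2_eq_2[symmetric])
  qed
  have q55: "Gp 8 0 0 \<in> Y"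
  proof -
    have "third (Gp 9 2 0) (Gp 1 1 0) \<in> Y" by (rule I95.rule_T[OF cl q9 q43]) simp_all
    then show ?thesis by (simp add: numeral_2_eq_2[symmetric])
  qed
  have q56: "Gp 6 0 0 \<in> Y"
  proof -
    have "third (Gp 7 2 0) (Gp 1 1 0) \<in> Y" by (rule I95.rule_T[OF cl q10 q43]) simp_all
    then show ?thesis by (simp add: numeral_2_eq_2[symmetric])
  qed
  have q57: "Gp 5 1 1 \<in> Y"
  proof -
    have "third (Gp 4 1 1) (Gp 1 1 0) \<in> Y" by (rule I95.rule_T[OF cl q11 q43]) simp_all
    then show ?thesis by (simp add: numeral_2_eq_2[symmetric])
  qed
  have q58: "Gp 7 1 1 \<in> Y"
  proof -
    have "third (Gp 6 1 1) (Gp 1 1 0) \<in> Y" by (rule I95.rule_T[OF cl q12 q43]) simp_all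
    then show ?thesis by (simp add: numeral_2_eq_2[symmetric])
  qed
  have q59: "Gp 7 2 1 \<in> Y"
  proof -
    have "third (Gp 6 0 1) (Gp 1 1 0) \<in> Y" by (rule I95.rule_T[OF cl q13 q43]) simp_all
    then show ?thesis by (simp add: numeral_2_eq_2[symmetric])
  qed
  have q60: "Gp 5 0 1 \<in> Y"
  proof -
    have "third (Gp 4 2 1) (Gp 1 1 0) \<in> Y" by (rule I95.rule_T[OF cl q14 q43]) simp_all
    then show ?thesis by (simp add: numeral_2_eq_2[symmetric])
  qed
  have q61: "Gp 8 1 0 \<in> Y"
  proof -
    have "third (Gp 9 1 0) (Gp 1 1 0) \<in> Y" by (rule I95.rule_T[OF cl q15 q43]) simp_all
    then show ?thesis by (simp add: numeral_2_eq_2[symmetric])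
  qed
  have q62: "Gp 7 0 1 \<in> Y"
  proof -
    have "third (Gp 6 2 1) (Gp 1 1 0) \<in> Y" by (rule I95.rule_T[OF cl q16 q43]) simp_all
    then show ?thesis by (simp add: numeral_2_eq_2[symmetric])
  qed
  have q63: "Gp 12 1 1 \<in> Y"
  proof -
    have "third (Gp 13 1 1) (Gp 1 1 0) \<in> Y" by (rule I95.rule_T[OF cl q17 q43]) simp_all
    then show ?thesis by (simp add: numeral_2_eq_2[symmetric])
  qed
  have q64: "Gp 3 0 0 \<in> Y"
  proof -
    have "third (Gp 2 2 0) (Gp 1 1 0) \<in> Y" by (rule I95.rule_T[OF cl q18 q43]) simp_all
    then show ?thesis by (simp add: numeral_2_eq_2[symmetric])
  qed
  have q65: "Gp 13 2 0 \<in> Y"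
  proof -
    have "third (Gp 12 0 0) (Gp 1 1 0) \<in> Y" by (rule I95.rule_T[OF cl q19 q43]) simp_all
    then show ?thesis by (simp add: numeral_2_eq_2[symmetric])
  qed
  have q66: "Gp 2 0 1 \<in> Y"
  proof -
    have "third (Gp 3 2 1) (Gp 1 1 0) \<in> Y" by (rule I95.rule_T[OF cl q20 q43]) simp_all
    then show ?thesis by (simp add: numeral_2_eq_2[symmetric])
  qed
  have q67: "Gp 14 1 1 \<in> Y"
  proof -
    have "third (Gp 15 1 1) (Gp 1 1 0) \<in> Y" by (rule I95.rule_T[OF cl q21 q43]) simp_all
    then show ?thesis by (simp add: numeral_2_eq_2[symmetric])
  qed
  have q68: "Gp 3 1 0 \<in> Y"
  proof -
    have "third (Gp 2 1 0) (Gp 1 1 0) \<in> Y" by (rule I95.rule_T[OF cl q23 q43]) simp_all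
    then show ?thesis by (simp add: numeral_2_eq_2[symmetric])
  qed
  have q69: "Gp 15 0 0 \<in> Y"
  proof -
    have "third (Gp 14 2 0) (Gp 1 1 0) \<in> Y" by (rule I95.rule_T[OF cl q24 q43]) simp_all
    then show ?thesis by (simp add: numeral_2_eq_2[symmetric])
  qed
  have q70: "Gp 13 0 0 \<in> Y"
  proof -
    have "third (Gp 12 2 0) (Gp 1 1 0) \<in> Y" by (rule I95.rule_T[OF cl q25 q43]) simp_all
    then show ?thesis by (simp add: numeral_2_eq_2[symmetric])
  qed
  have q71: "Gp 15 1 0 \<in> Y"
  proof -
    have "third (Gp 14 1 0) (Gp 1 1 0) \<in> Y" by (rule I95.rule_T[OF cl q26 q43]) simp_all
    then show ?thesis by (simp add: numeral_2_eq_2[symmetric])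
  qed
  have q72: "Gp 13 1 0 \<in> Y"
  proof -
    have "third (Gp 12 1 0) (Gp 1 1 0) \<in> Y" by (rule I95.rule_T[OF cl q27 q43]) simp_all
    then show ?thesis by (simp add: numeral_2_eq_2[symmetric])
  qed
  have q73: "Gp 9 1 1 \<in> Y"
  proof -
    have "third (Gp 8 1 1) (Gp 1 1 0) \<in> Y" by (rule I95.rule_T[OF cl q28 q43]) simp_all
    then show ?thesis by (simp add: numeral_2_eq_2[symmetric])
  qed
  have q74: "Gp 4 0 0 \<in> Y"
  proof -
    have "third (Gp 5 2 0) (Gp 1 1 0) \<in> Y" by (rule I95.rule_T[OF cl q29 q43]) simp_all
    then show ?thesis by (simp add: numeral_2_eq_2[symmetric])
  qed
  have q75: "Gp 10 1 0 \<in> Y"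
  proof -
    have "third (Gp 11 1 0) (Gp 1 1 0) \<in> Y" by (rule I95.rule_T[OF cl q30 q43]) simp_all
    then show ?thesis by (simp add: numeral_2_eq_2[symmetric])
  qed
  have q76: "Gp 9 0 1 \<in> Y"
  proof -
    have "third (Gp 8 2 1) (Gp 1 1 0) \<in> Y" by (rule I95.rule_T[OF cl q31 q43]) simp_all
    then show ?thesis by (simp add: numeral_2_eq_2[symmetric])
  qed
  have q77: "Gp 2 2 1 \<in> Y"
  proof -
    have "third (Gp 3 0 1) (Gp 1 1 0) \<in> Y" by (rule I95.rule_T[OF cl q33 q43]) simp_all
    then show ?thesis by (simp add: numeral_2_eq_2[symmetric])
  qed
  have q78: "Gp 6 2 0 \<in> Y"
  proof -
    have "third (Gp 7 0 0) (Gp 1 1 0) \<in> Y" by (rule I95.rule_T[OF cl q34 q43]) simp_all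
    then show ?thesis by (simp add: numeral_2_eq_2[symmetric])
  qed
  have q79: "Gp 11 1 1 \<in> Y"
  proof -
    have "third (Gp 10 1 1) (Gp 1 1 0) \<in> Y" by (rule I95.rule_T[OF cl q35 q43]) simp_all
    then show ?thesis by (simp add: numeral_2_eq_2[symmetric])
  qed
  have q80: "Gp 11 0 1 \<in> Y"
  proof -
    have "third (Gp 10 2 1) (Gp 1 1 0) \<in> Y" by (rule I95.rule_T[OF cl q36 q43]) simp_all
    then show ?thesis by (simp add: numeral_2_eq_2[symmetric])
  qed
  have q81: "Gp 14 2 1 \<in> Y"
  proof -
    have "third (Gp 15 0 1) (Gp 1 1 0) \<in> Y" by (rule I95.rule_T[OF cl q37 q43]) simp_all
    then show ?thesis by (simp add: numeral_2_eq_2[symmetric])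
  qed
  have q82: "Gp 12 2 1 \<in> Y"
  proof -
    have "third (Gp 13 0 1) (Gp 1 1 0) \<in> Y" by (rule I95.rule_T[OF cl q38 q43]) simp_all
    then show ?thesis by (simp add: numeral_2_eq_2[symmetric])
  qed
  have q83: "Gp 8 2 0 \<in> Y"
  proof -
    have "third (Gp 9 0 0) (Gp 1 1 0) \<in> Y" by (rule I95.rule_T[OF cl q39 q43]) simp_all
    then show ?thesis by (simp add: numeral_2_eq_2[symmetric])
  qed
  have q84: "Gp 10 2 0 \<in> Y"
  proof -
    have "third (Gp 11 0 0) (Gp 1 1 0) \<in> Y" by (rule I95.rule_T[OF cl q40 q43]) simp_all
    then show ?thesis by (simp add: numeral_2_eq_2[symmetric])
  qed
  have q85: "Gp 4 2 0 \<in> Y"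
  proof -
    have "third (Gp 5 0 0) (Gp 1 1 0) \<in> Y" by (rule I95.rule_T[OF cl q41 q43]) simp_all
    then show ?thesis by (simp add: numeral_2_eq_2[symmetric])
  qed
  have q86: "Gp 1 2 0 \<in> Y"
  proof -
    have "third (Gp 10 0 1) (Gp 11 1 1) \<in> Y" by (rule I95.rule_T[OF cl s1 q79]) simp_all
    then show ?thesis by (simp add: numeral_2_eq_2[symmetric])
  qed
  have q87: "Gp 1 0 0 \<in> Y"
  proof -
    have "third (Gp 10 0 1) (Gp 11 0 1) \<in> Y" by (rule I95.rule_T[OF cl s1 q80]) simp_all
    then show ?thesis by (simp add: numeral_2_eq_2[symmetric])
  qed
  have la: "lift 1 (Gp 0 0 0) \<in> Y" using q87 by (simp only: lift.simps)
  have lb: "lift 1 (Gp 0 2 1) \<in> Y" using q22 by (simp only: lift.simps)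
  have "lift 1 ` set (L95 ! 1) \<subseteq> Y"
    by (rule I95.rule_L[OF cl _ _ GD95_nth[of 1] _ _ _ _ la lb, where t=0 and u=0]) (simp_all add: len95 L95_1)
  then have q88: "Wp 0 \<in> Y" by (simp only: L95_1 list.set image_insert image_empty lift.simps insert_subset empty_subsetI simp_thms)
  have la: "lift 1 (Gp 0 2 0) \<in> Y" using q86 by (simp only: lift.simps)
  have lb: "lift 1 (Gp 0 2 1) \<in> Y" using q22 by (simp only: lift.simps)
  have "lift 1 ` set (L95 ! 7) \<subseteq> Y"
    by (rule I95.rule_L[OF cl _ _ GD95_nth[of 7] _ _ _ _ la lb, where t=2 and u=0]) (simp_all add: len95 L95_7)
  then have q89: "Wp 2 \<in> Y" by (simp only: L95_7 list.set image_insert image_empty lift.simps insert_subset empty_subsetI simp_thms)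
  have la: "lift 1 (Gp 0 0 1) \<in> Y" using q32 by (simp only: lift.simps)
  have lb: "lift 1 (Gp 0 2 1) \<in> Y" using q22 by (simp only: lift.simps)
  have "lift 1 ` set (L95 ! 10) \<subseteq> Y"
    by (rule I95.rule_L[OF cl _ _ GD95_nth[of 10] _ _ _ _ la lb, where t=0 and u=1]) (simp_all add: len95 L95_10)
  then have q90: "Wp 3 \<in> Y" by (simp only: L95_10 list.set image_insert image_empty lift.simps insert_subset empty_subsetI simp_thms)
  have la: "lift 1 (Gp 0 1 1) \<in> Y" using q3 by (simp only: lift.simps)
  have lb: "lift 1 (Gp 0 2 1) \<in> Y" using q22 by (simp only: lift.simps)
  have "lift 1 ` set (L95 ! 13) \<subseteq> Y"
    by (rule I95.rule_L[OF cl _ _ GD95_nth[of 13] _ _ _ _ la lb, where t=1 and u=1]) (simp_all add: len95 L95_13)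
  then have q91: "Wp 4 \<in> Y" by (simp only: L95_13 list.set image_insert image_empty lift.simps insert_subset empty_subsetI simp_thms)
  show ?thesis
  proof
    fix p assume pX: "p \<in> Xp 16 2"
    show "p \<in> Y"
    proof (cases p)
      case (Wp j)
      then have "j < 5" using pX by simp
      then have "j = 0 \<or> j = 1 \<or> j = 2 \<or> j = 3 \<or> j = 4" by (rule r5)
      then show ?thesis using Wp q1 q10 q11 q12 q13 q14 q15 q16 q17 q18 q19 q2 q20 q21 q22 q23 q24 q25 q26 q27 q28 q29 q3 q30 q31 q32 q33 q34 q35 q36 q37 q38 q39 q4 q40 q41 q42 q43 q44 q45 q46 q47 q48 q49 q5 q50 q51 q52 q53 q54 q55 q56 q57 q58 q59 q6 q60 q61 q62 q63 q64 q65 q66 q67 q68 q69 q7 q70 q71 q72 q73 q74 q75 q76 q77 q78 q79 q8 q80 q81 q82 q83 q84 q85 q86 q87 q88 q89 q9 q90 q91 s1 s2 s3 s4 by (elim disjE) simp_all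
    next
      case (Gp i t u)
      then have b: "1 \<le> i" "i < 16" "t < 3" "u < 2" using pX by simp_all
      from r16[OF b(1,2)] r3[OF b(3)] r2[OF b(4)] show ?thesis using Gp q1 q10 q11 q12 q13 q14 q15 q16 q17 q18 q19 q2 q20 q21 q22 q23 q24 q25 q26 q27 q28 q29 q3 q30 q31 q32 q33 q34 q35 q36 q37 q38 q39 q4 q40 q41 q42 q43 q44 q45 q46 q47 q48 q49 q5 q50 q51 q52 q53 q54 q55 q56 q57 q58 q59 q6 q60 q61 q62 q63 q64 q65 q66 q67 q68 q69 q7 q70 q71 q72 q73 q74 q75 q76 q77 q78 q79 q8 q80 q81 q82 q83 q84 q85 q86 q87 q88 q89 q9 q90 q91 s1 s2 s3 s4 by (elim disjE) simp_all
    qed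
  qed
qed

lemma not_sipf4_89: "\<not> sets_in_proper_flats (Xp 8 4) (Bp 8 4 GD89) 4"
proof
  assume s: "sets_in_proper_flats (Xp 8 4) (Bp 8 4 GD89) 4"
  let ?S = "{Gp 3 0 1, Gp 6 2 2, Gp 6 1 0, Gp 1 2 3}"
  have "?S \<subseteq> Xp 8 4 \<and> card ?S = 4" by simp
  then obtain Y where Y: "is_proper_flat (Xp 8 4) (Bp 8 4 GD89) Y" "?S \<subseteq> Y"
    using s[unfolded sets_in_proper_flats_def, rule_format, of ?S] by blast
  then have P: "Y \<subseteq> Xp 8 4" "closedB (Bp 8 4 GD89) Y" "Y \<noteq> Xp 8 4"
    using pbd2_proper_iff[OF I89.design_pbd] by auto
  have "Xp 8 4 \<subseteq> Y" by (rule no4_89[OF P(2)]) (use Y(2) in auto)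
  then show False using P by blast
qed

lemma not_sipf4_95: "\<not> sets_in_proper_flats (Xp 16 2) (Bp 16 2 GD95) 4"
proof
  assume s: "sets_in_proper_flats (Xp 16 2) (Bp 16 2 GD95) 4"
  let ?S = "{Gp 10 0 1, Gp 5 1 0, Gp 8 0 1, Gp 11 2 0}"
  have "?S \<subseteq> Xp 16 2 \<and> card ?S = 4" by simp
  then obtain Y where Y: "is_proper_flat (Xp 16 2) (Bp 16 2 GD95) Y" "?S \<subseteq> Y"
    using s[unfolded sets_in_proper_flats_def, rule_format, of ?S] by blast
  then have P: "Y \<subseteq> Xp 16 2" "closedB (Bp 16 2 GD95) Y" "Y \<noteq> Xp 16 2"
    using pbd2_proper_iff[OF I95.design_pbd] by auto
  have "Xp 16 2 \<subseteq> Y" by (rule no4_95[OF P(2)]) (use Y(2) in auto)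
  then show False using P by blast
qed

lemma main89: "pbd2 (Xp 8 4) (Bp 8 4 GD89) 89 {3,5} \<and> pbd_dimension (Xp 8 4) (Bp 8 4 GD89) = 3"
proof
  show P: "pbd2 (Xp 8 4) (Bp 8 4 GD89) 89 {3,5}" using I89.design_pbd by simp
  show "pbd_dimension (Xp 8 4) (Bp 8 4 GD89) = 3"
  proof (rule dim3)
    show "finite (Xp 8 4)" by (rule I89.Xp_fin)
    show "4 \<le> card (Xp 8 4)" using I89.Xp_card by simp
    show "sets_in_proper_flats (Xp 8 4) (Bp 8 4 GD89) 3" by (rule I89.sipf3_cos[OF _ _ cos89]) simp_all
    show "\<not> sets_in_proper_flats (Xp 8 4) (Bp 8 4 GD89) 4" by (rule not_sipf4_89)
  qed
qed

lemma main95: "pbd2 (Xp 16 2) (Bp 16 2 GD95) 95 {3,5} \<and> pbd_dimension (Xp 16 2) (Bp 16 2 GD95) = 3"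
proof
  show P: "pbd2 (Xp 16 2) (Bp 16 2 GD95) 95 {3,5}" using I95.design_pbd by simp
  show "pbd_dimension (Xp 16 2) (Bp 16 2 GD95) = 3"
  proof (rule dim3)
    show "finite (Xp 16 2)" by (rule I95.Xp_fin)
    show "4 \<le> card (Xp 16 2)" using I95.Xp_card by simp
    show "sets_in_proper_flats (Xp 16 2) (Bp 16 2 GD95) 3" by (rule I95.sipf3_big) simp
    show "\<not> sets_in_proper_flats (Xp 16 2) (Bp 16 2 GD95) 4" by (rule not_sipf4_95)
  qed
qed

instance pt :: countable by countable_datatype

lemma to_nat_ex:
  assumes "pbd2 (X :: pt set) B v K \<and> pbd_dimension X B = d"
  shows "\<exists>(X' :: nat set) B'. PBD X' B' v K \<and> pbd_dimension X' B' = d"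
proof (intro exI conjI)
  show "PBD (to_nat ` X) ((`) to_nat ` B) v K"
    by (rule pbd2_PBD, rule pbd2_image[OF inj_to_nat]) (use assms in simp)
  show "pbd_dimension (to_nat ` X) ((`) to_nat ` B) = d"
    using dim_image[OF inj_to_nat, of X B v K] assms by simp
qed

theorem proposition3p9:
  shows "\<forall>v \<in> {89, 95}. \<exists>(X :: nat set) \<B>.
           PBD X \<B> v {3, 5} \<and> pbd_dimension X \<B> = 3"
  using to_nat_ex[OF main89] to_nat_ex[OF main95] by simp

end
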